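(* Consider a Pandora's box problem with sequential inspection. Let $(\mathcal{C},\mathcal{P},y)$ be any state in which stopping is not an optimal action, and suppose that a closed box $i\in\mathcal{C}$ satisfies $\sigma_i^F>\sigma_i^P$ and that $\sigma_i^F$ is the largest opening threshold in that state, i.e. $$\sigma_i^F=\max\Big\{\max_{j\in\mathcal{C}}\max\{\sigma_j^F,\sigma_j^P\},\ \max_{j\in\mathcal{P}}\sigma_j^{F\mid t_j}\Big\}.$$ Then there exists an optimal policy that F-opens box $i$ immediately.
   Context: Pandora's box problem with sequential inspection: there are $N$ independent boxes. Box $i$ has a type $T_i$ taking values in a finite set $\Gamma_i$ and a nonnegative prize $V_i$, with a known joint distribution of $(V_i,T_i)$; different boxes are independent. A closed box $i$ can be F-opened (fully opened) at cost $c_i^F$, which reveals $V_i$, or P-opened (partially opened) at cost $c_i^P$, which reveals only $T_i$; a partially opened box can later be F-opened at an additional cost $c_i^F$. At any time the decision maker may stop and collect the largest prize among the F-opened boxes (or the initial value $y$). The objective is to maximize the expected collected prize minus the total inspection costs. A state is $(\mathcal{C},\mathcal{P},y)$ where $\mathcal{C}$ is the set of closed boxes, $\mathcal{P}$ is the set of partially opened boxes together with their revealed types $t_j$, and $y$ is the largest prize found so far. Thresholds: $\sigma_i^F$ solves $\mathbb{E}[(V_i-\sigma)^+]=c_i^F$; $\sigma_i^{F\mid t}$ solves $\mathbb{E}[(V_i-\sigma)^+\mid T_i=t]=c_i^F$; $\sigma_i^P$ solves $\mathbb{E}\big[\max\{0,-c_i^F+\mathbb{E}[(V_i-\sigma)^+\mid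 T_i]\}\big]=c_i^P$. The opening thresholds of a state are $\sigma_j^F,\sigma_j^P$ for $j\in\mathcal{C}$ and $\sigma_j^{F\mid t_j}$ for $j\in\mathcal{P}$. *)

theory Defs
  imports "HOL-Probability.Probability"
begin

text \<open>Box b has a type distribution Q b (a pmf on types; its support is the finite set Gamma_b)
  and, for every type t, a conditional prize distribution K b t (a probability measure on the
  reals).  The joint law of (V_b, T_b) is the mixture of K b t over t drawn from Q b.
  cF b and cP b are the F- and P-opening costs.
  A state is (C, P, y): C the closed boxes, P a partial map sending every partially opened
  box to its revealed type, y the best prize found so far.\<close>

text \<open>Bellman recursion with explicit fuel n (each action consumes fuel).\<close>
fun pb_W :: "('b \<Rightarrow> 't pmf) \<Rightarrow> ('b \<Rightarrow> 't \<Rightarrow> real measure) \<Rightarrow> ('b \<Rightarrow> real) \<Rightarrow> ('b \<Rightarrow> real)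
             \<Rightarrow> nat \<Rightarrow> 'b set \<Rightarrow> ('b \<rightharpoonup> 't) \<Rightarrow> real \<Rightarrow> real" where
  "pb_W Q K cF cP 0 C P y = y"
| "pb_W Q K cF cP (Suc n) C P y =
     Max ({y}
       \<union> (\<lambda>i. - cF i + (\<integral>t. (\<integral>v. pb_W Q K cF cP n (C - {i}) P (max y v) \<partial>K i t) \<partial>measure_pmf (Q i))) ` C
       \<union> (\<lambda>i. - cP i + (\<integral>t. pb_W Q K cF cP n (C - {i}) (P(i \<mapsto> t)) y \<partial>measure_pmf (Q i))) ` C
       \<union> (\<lambda>j. - cF j + (\<integral>v. pb_W Q K cF cP n C (P(j := None)) (max y v) \<partial>K j (the (P j)))) ` dom P)"

text \<open>Optimal expected payoff (prize minus costs) from state (C, P, y): the recursion run with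
  exactly enough fuel to exhaust all boxes (F-opening a closed box = 2 units, P-opening = 1,
  F-opening a partially opened box = 1).\<close>
definition pb_value :: "('b \<Rightarrow> 't pmf) \<Rightarrow> ('b \<Rightarrow> 't \<Rightarrow> real measure) \<Rightarrow> ('b \<Rightarrow> real) \<Rightarrow> ('b \<Rightarrow> real)
             \<Rightarrow> 'b set \<Rightarrow> ('b \<rightharpoonup> 't) \<Rightarrow> real \<Rightarrow> real" where
  "pb_value Q K cF cP C P y = pb_W Q K cF cP (2 * card C + card (dom P)) C P y"

definition pb_value_Fopen :: "('b \<Rightarrow> 't pmf) \<Rightarrow> ('b \<Rightarrow> 't \<Rightarrow> real measure) \<Rightarrow> ('b \<Rightarrow> real) \<Rightarrow> ('b \<Rightarrow> real)
             \<Rightarrow> 'b set \<Rightarrow> ('b \<rightharpoonup> 't) \<Rightarrow> real \<Rightarrow> 'b \<Rightarrow> real" where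
  "pb_value_Fopen Q K cF cP C P y i =
     - cF i + (\<integral>t. (\<integral>v. pb_value Q K cF cP (C - {i}) P (max y v) \<partial>K i t) \<partial>measure_pmf (Q i))"

definition is_sigmaF :: "'t pmf \<Rightarrow> ('t \<Rightarrow> real measure) \<Rightarrow> real \<Rightarrow> real \<Rightarrow> bool" where
  "is_sigmaF Qb Kb c \<sigma> \<longleftrightarrow> (\<integral>t. (\<integral>v. max 0 (v - \<sigma>) \<partial>Kb t) \<partial>measure_pmf Qb) = c"

definition is_sigmaF_cond :: "real measure \<Rightarrow> real \<Rightarrow> real \<Rightarrow> bool" where
  "is_sigmaF_cond Kbt c \<sigma> \<longleftrightarrow> (\<integral>v. max 0 (v - \<sigma>) \<partial>Kbt) = c"

definition is_sigmaP :: "'t pmf \<Rightarrow> ('t \<Rightarrow> real measure) \<Rightarrow> real \<Rightarrow> real \<Rightarrow> real \<Rightarrow> bool" where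
  "is_sigmaP Qb Kb cf cp \<sigma> \<longleftrightarrow>
     (\<integral>t. max 0 (- cf + (\<integral>v. max 0 (v - \<sigma>) \<partial>Kb t)) \<partial>measure_pmf Qb) = cp"

end

theory Submission
  imports Defs
begin


definition goodM :: "real measure \<Rightarrow> bool" where
  "goodM M \<longleftrightarrow> prob_space M \<and> sets M = sets borel \<and> integrable M (\<lambda>v. v)"

definition goodK :: "'t pmf \<Rightarrow> ('t \<Rightarrow> real measure) \<Rightarrow> bool" where
  "goodK Qb Kb \<longleftrightarrow> finite (set_pmf Qb) \<and> (\<forall>t\<in>set_pmf Qb. goodM (Kb t))"

definition nice1 :: "(real \<Rightarrow> real) \<Rightarrow> bool" where
  "nice1 f \<longleftrightarrow> continuous_on UNIV f \<and> (\<exists>A. \<forall>u. \<bar>f u\<bar> \<le> A + A * \<bar>u\<bar>)"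

definition nice2 :: "(real \<Rightarrow> real \<Rightarrow> real) \<Rightarrow> bool" where
  "nice2 F \<longleftrightarrow> continuous_on UNIV (\<lambda>p. F (fst p) (snd p)) \<and>
     (\<exists>A. \<forall>u v. \<bar>F u v\<bar> \<le> A + A * \<bar>u\<bar> + A * \<bar>v\<bar>)"

definition ExK :: "'t pmf \<Rightarrow> ('t \<Rightarrow> real measure) \<Rightarrow> (real \<Rightarrow> real) \<Rightarrow> real" where
  "ExK Qb Kb f = (\<integral>t. (\<integral>u. f u \<partial>Kb t) \<partial>measure_pmf Qb)"

lemma goodM_meas:
  assumes "goodM M" "continuous_on UNIV f"
  shows "f \<in> borel_measurable M"
proof -
  have "f \<in> borel_measurable borel" using assms(2) by (rule borel_measurable_continuous_onI)
  moreover have "sets M = sets borel" using assms(1) by (simp add: goodM_def)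
  ultimately show ?thesis using measurable_cong_sets by blast
qed

lemma nice1_integrable:
  assumes "goodM M" "nice1 f"
  shows "integrable M f"
proof -
  interpret prob_space M using assms(1) by (simp add: goodM_def)
  obtain A where A: "\<And>u. \<bar>f u\<bar> \<le> A + A * \<bar>u\<bar>" using assms(2) by (auto simp: nice1_def)
  have i: "integrable M (\<lambda>v. v)" using assms(1) by (simp add: goodM_def)
  have "integrable M (\<lambda>u. A + A * \<bar>u\<bar>)"
    using i by auto
  moreover have "f \<in> borel_measurable M"
    using assms by (intro goodM_meas) (auto simp: nice1_def)
  ultimately show ?thesis
  proof (rule Bochner_Integration.integrable_bound)
    show "AE x in M. norm (f x) \<le> norm (A + A * \<bar>x\<bar>)"
      using A by (auto intro: order_trans[OF _ abs_ge_self])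
  qed
qed

lemma nice2_swap: "nice2 F \<Longrightarrow> nice2 (\<lambda>v u. F u v)"
proof -
  assume n: "nice2 F"
  then obtain A where A: "\<And>u v. \<bar>F u v\<bar> \<le> A + A * \<bar>u\<bar> + A * \<bar>v\<bar>" by (auto simp: nice2_def)
  have c: "continuous_on UNIV (\<lambda>p. F (fst p) (snd p))" using n by (simp add: nice2_def)
  have "continuous_on UNIV ((\<lambda>p. F (fst p) (snd p)) \<circ> (\<lambda>p. (snd p, fst p)))"
    by (rule continuous_on_compose[OF _ continuous_on_subset[OF c]]) (auto intro!: continuous_intros)
  moreover have "\<forall>u v. \<bar>F v u\<bar> \<le> A + A * \<bar>u\<bar> + A * \<bar>v\<bar>"
    using A by (smt (verit))
  ultimately show ?thesis unfolding nice2_def o_def by auto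
qed

lemma nice2_sec1: "nice2 F \<Longrightarrow> nice1 (F u)"
proof -
  assume n: "nice2 F"
  then obtain A where A: "\<And>u v. \<bar>F u v\<bar> \<le> A + A * \<bar>u\<bar> + A * \<bar>v\<bar>" by (auto simp: nice2_def)
  have c: "continuous_on UNIV (\<lambda>p. F (fst p) (snd p))" using n by (simp add: nice2_def)
  have "continuous_on UNIV ((\<lambda>p. F (fst p) (snd p)) \<circ> (\<lambda>v. (u, v)))"
    by (rule continuous_on_compose[OF _ continuous_on_subset[OF c]]) (auto intro!: continuous_intros)
  moreover have "A \<ge> 0" using A[of 0 0] by simp
  moreover have "\<bar>F u v\<bar> \<le> (A + A*\<bar>u\<bar>) + (A + A*\<bar>u\<bar>) * \<bar>v\<bar>" for v
    using A[of u v] \<open>A \<ge> 0\<close> by (smt (verit) mult_nonneg_nonneg abs_ge_zero mult_right_mono distrib_right)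
  ultimately show ?thesis unfolding nice1_def o_def by auto
qed

lemma nice2_sec2: assumes "nice2 F" shows "nice1 (\<lambda>u. F u v)"
  using nice2_sec1[OF nice2_swap[OF assms], of v] by simp

lemma nice2_prod_int:
  assumes M1: "goodM M1" and M2: "goodM M2" and n: "nice2 F"
  shows "integrable (M1 \<Otimes>\<^sub>M M2) (\<lambda>p. F (fst p) (snd p))"
proof -
  interpret M1: prob_space M1 using M1 by (simp add: goodM_def)
  interpret M2: prob_space M2 using M2 by (simp add: goodM_def)
  interpret pair_prob_space M1 M2 by unfold_locales
  obtain A where A: "\<And>u v. \<bar>F u v\<bar> \<le> A + A * \<bar>u\<bar> + A * \<bar>v\<bar>" using n by (auto simp: nice2_def)
  have c: "continuous_on UNIV (\<lambda>p. F (fst p) (snd p))" using n by (simp add: nice2_def)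
  have s1: "sets M1 = sets borel" and s2: "sets M2 = sets borel" using M1 M2 by (auto simp: goodM_def)
  have sp: "sets (M1 \<Otimes>\<^sub>M M2) = sets (borel :: (real \<times> real) measure)"
    by (metis sets_pair_measure_cong[OF s1 s2] borel_prod)
  have meas: "(\<lambda>p. F (fst p) (snd p)) \<in> borel_measurable (M1 \<Otimes>\<^sub>M M2)"
    using borel_measurable_continuous_onI[OF c] measurable_cong_sets[OF sp refl] by blast
  have meas': "case_prod (\<lambda>x y. \<bar>F x y\<bar>) \<in> borel_measurable (M1 \<Otimes>\<^sub>M M2)"
    using borel_measurable_abs[OF meas] by (simp add: case_prod_beta')
  have i2: "integrable M2 (\<lambda>v. v)" using M2 by (simp add: goodM_def)
  have i1: "integrable M1 (\<lambda>v. v)" using M1 by (simp add: goodM_def)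
  show ?thesis
  proof (rule Fubini_integrable[OF meas])
    have bm: "(\<lambda>x. \<integral>y. \<bar>F x y\<bar> \<partial>M2) \<in> borel_measurable M1"
      using M2.borel_measurable_lebesgue_integral[OF meas'] .
    have "integrable M1 (\<lambda>x. A + A * \<bar>x\<bar> + A * (\<integral>y. \<bar>y\<bar> \<partial>M2))"
      using i1 by auto
    then show "integrable M1 (\<lambda>x. \<integral>y. norm (F (fst (x, y)) (snd (x, y))) \<partial>M2)"
    proof (rule Bochner_Integration.integrable_bound)
      show "(\<lambda>x. \<integral>y. norm (F (fst (x, y)) (snd (x, y))) \<partial>M2) \<in> borel_measurable M1"
        using bm by simp
      show "AE x in M1. norm (\<integral>y. norm (F (fst (x, y)) (snd (x, y))) \<partial>M2)
             \<le> norm (A + A * \<bar>x\<bar> + A * (\<integral>y. \<bar>y\<bar> \<partial>M2))"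
      proof (intro AE_I2)
        fix x
        have ix: "integrable M2 (\<lambda>y. \<bar>F x y\<bar>)"
          using nice1_integrable[OF M2 nice2_sec1[OF n, of x]] by simp
        have iy: "integrable M2 (\<lambda>y. A + A * \<bar>x\<bar> + A * \<bar>y\<bar>)"
          using i2 by auto
        have "(\<integral>y. \<bar>F x y\<bar> \<partial>M2) \<le> (\<integral>y. A + A * \<bar>x\<bar> + A * \<bar>y\<bar> \<partial>M2)"
          using ix iy A by (intro integral_mono) auto
        also have "\<dots> = A + A * \<bar>x\<bar> + A * (\<integral>y. \<bar>y\<bar> \<partial>M2)"
        proof -
          have ia: "integrable M2 (\<lambda>y. A * \<bar>y\<bar>)" using i2 by auto
          have "(\<integral>y. (A + A * \<bar>x\<bar>) + A * \<bar>y\<bar> \<partial>M2) = (\<integral>y. (A + A * \<bar>x\<bar>) \<partial>M2) + (\<integral>y. A * \<bar>y\<bar> \<partial>M2)"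
            by (rule Bochner_Integration.integral_add[OF M2.integrable_const ia])
          then show ?thesis by (simp add: M2.prob_space)
        qed
        finally have "(\<integral>y. \<bar>F x y\<bar> \<partial>M2) \<le> A + A * \<bar>x\<bar> + A * (\<integral>y. \<bar>y\<bar> \<partial>M2)" .
        moreover have "0 \<le> (\<integral>y. \<bar>F x y\<bar> \<partial>M2)" by (rule Bochner_Integration.integral_nonneg) auto
        ultimately show "norm (\<integral>y. norm (F (fst (x, y)) (snd (x, y))) \<partial>M2)
             \<le> norm (A + A * \<bar>x\<bar> + A * (\<integral>y. \<bar>y\<bar> \<partial>M2))" by simp
      qed
    qed
    show "AE x in M1. integrable M2 (\<lambda>y. F (fst (x, y)) (snd (x, y)))"
      using nice1_integrable[OF M2 nice2_sec1[OF n]] by simp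
  qed
qed

lemma fubini_swap:
  assumes M1: "goodM M1" and M2: "goodM M2" and n: "nice2 F"
  shows "(\<integral>v. (\<integral>u. F u v \<partial>M2) \<partial>M1) = (\<integral>u. (\<integral>v. F u v \<partial>M1) \<partial>M2)"
proof -
  interpret M1: prob_space M1 using M1 by (simp add: goodM_def)
  interpret M2: prob_space M2 using M2 by (simp add: goodM_def)
  interpret pair_prob_space M1 M2 by unfold_locales
  have "integrable (M1 \<Otimes>\<^sub>M M2) (case_prod (\<lambda>v u. F u v))"
    using nice2_prod_int[OF M1 M2 nice2_swap[OF n]] by (simp add: case_prod_beta')
  from Fubini_integral[OF this] show ?thesis by simp
qed

lemma inner_int:
  assumes M1: "goodM M1" and M2: "goodM M2" and n: "nice2 F"
  shows "integrable M1 (\<lambda>v. \<integral>u. F u v \<partial>M2)"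
proof -
  interpret M1: prob_space M1 using M1 by (simp add: goodM_def)
  interpret M2: prob_space M2 using M2 by (simp add: goodM_def)
  interpret pair_prob_space M1 M2 by unfold_locales
  have "integrable (M1 \<Otimes>\<^sub>M M2) (\<lambda>p. (\<lambda>v u. F u v) (fst p) (snd p))"
    using nice2_prod_int[OF M1 M2 nice2_swap[OF n]] .
  from integrable_fst'[OF this] show ?thesis by simp
qed




lemma pmf_int_sum:
  assumes "finite (set_pmf p)"
  shows "(\<integral>t. g t \<partial>measure_pmf p) = (\<Sum>t\<in>set_pmf p. pmf p t * g t)"
  by (subst integral_measure_pmf_real[OF assms]) (auto simp: mult.commute)

lemma pmf_cong:
  assumes "\<And>t. t \<in> set_pmf p \<Longrightarrow> f t = g t"
  shows "(\<integral>t. f t \<partial>measure_pmf p) = (\<integral>t. g t \<partial>measure_pmf p)"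
  using assms by (intro integral_cong_AE) (auto simp: AE_measure_pmf_iff)

lemma pmf_mono:
  assumes "finite (set_pmf p)" "\<And>t. t \<in> set_pmf p \<Longrightarrow> f t \<le> (g t::real)"
  shows "(\<integral>t. f t \<partial>measure_pmf p) \<le> (\<integral>t. g t \<partial>measure_pmf p)"
  using assms by (intro integral_mono_AE integrable_measure_pmf_finite) (auto simp: AE_measure_pmf_iff)

lemma pmf_add:
  assumes "finite (set_pmf p)"
  shows "(\<integral>t. f t + g t \<partial>measure_pmf p) = (\<integral>t. f t \<partial>measure_pmf p) + (\<integral>t. (g t::real) \<partial>measure_pmf p)"
  using assms by (intro Bochner_Integration.integral_add integrable_measure_pmf_finite)

lemma pmf_const: "(\<integral>t. (c::real) \<partial>measure_pmf p) = c"
  by (simp add: measure_pmf.prob_space)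

lemma pmf_add_const:
  assumes "finite (set_pmf p)"
  shows "(\<integral>t. f t + c \<partial>measure_pmf p) = (\<integral>t. (f t::real) \<partial>measure_pmf p) + (c::real)"
  using pmf_add[OF assms, of f "\<lambda>_. c"] by (simp add: pmf_const)

lemma pmf_const_add:
  assumes "finite (set_pmf p)"
  shows "(\<integral>t. c + f t \<partial>measure_pmf p) = c + (\<integral>t. (f t::real) \<partial>measure_pmf p)"
  using pmf_add_const[OF assms, of f c] by (simp add: add.commute)

lemma pmf_pmf_swap:
  assumes "finite (set_pmf p1)" "finite (set_pmf p2)"
  shows "(\<integral>t1. (\<integral>t2. F t1 t2 \<partial>measure_pmf p2) \<partial>measure_pmf p1)
       = (\<integral>t2. (\<integral>t1. (F t1 t2::real) \<partial>measure_pmf p1) \<partial>measure_pmf p2)"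
  using assms by (simp add: pmf_int_sum sum_distrib_left sum.swap[of _ "set_pmf p1"] mult.left_commute)

lemma pmf_int_integrable:
  assumes "finite (set_pmf p)" "\<And>t. t \<in> set_pmf p \<Longrightarrow> integrable M (G t)"
  shows "integrable M (\<lambda>u. \<integral>t. (G t u::real) \<partial>measure_pmf p)"
  using assms by (simp add: pmf_int_sum)

lemma pmf_K_swap:
  assumes "finite (set_pmf p)" "\<And>t. t \<in> set_pmf p \<Longrightarrow> integrable M (G t)"
  shows "(\<integral>t. (\<integral>u. G t u \<partial>M) \<partial>measure_pmf p) = (\<integral>u. (\<integral>t. (G t u::real) \<partial>measure_pmf p) \<partial>M)"
proof -
  have "(\<integral>t. (\<integral>u. G t u \<partial>M) \<partial>measure_pmf p) = (\<Sum>t\<in>set_pmf p. pmf p t * (\<integral>u. G t u \<partial>M))"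
    using assms by (simp add: pmf_int_sum)
  also have "\<dots> = (\<Sum>t\<in>set_pmf p. (\<integral>u. pmf p t * G t u \<partial>M))"
    by simp
  also have "\<dots> = (\<integral>u. (\<Sum>t\<in>set_pmf p. pmf p t * G t u) \<partial>M)"
    by (rule Bochner_Integration.integral_sum[symmetric]) (use assms in auto)
  also have "\<dots> = (\<integral>u. (\<integral>t. G t u \<partial>measure_pmf p) \<partial>M)"
    using assms by (simp add: pmf_int_sum)
  finally show ?thesis .
qed

definition intK :: "'t pmf \<Rightarrow> ('t \<Rightarrow> real measure) \<Rightarrow> (real \<Rightarrow> real) \<Rightarrow> bool" where
  "intK Qb Kb f \<longleftrightarrow> (\<forall>t\<in>set_pmf Qb. integrable (Kb t) f)"

lemma goodK_fin: "goodK Qb Kb \<Longrightarrow> finite (set_pmf Qb)"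
  by (simp add: goodK_def)

lemma goodK_M: "goodK Qb Kb \<Longrightarrow> t \<in> set_pmf Qb \<Longrightarrow> goodM (Kb t)"
  by (simp add: goodK_def)

lemma goodM_prob: "goodM M \<Longrightarrow> prob_space M"
  by (simp add: goodM_def)

lemma nice1_intK: "goodK Qb Kb \<Longrightarrow> nice1 f \<Longrightarrow> intK Qb Kb f"
  by (auto simp: intK_def goodK_def intro: nice1_integrable)

lemma Ex_mono:
  assumes g: "goodK Qb Kb" and "intK Qb Kb f" "intK Qb Kb h" "\<And>u. f u \<le> h u"
  shows "ExK Qb Kb f \<le> ExK Qb Kb h"
  unfolding ExK_def using assms
  by (intro pmf_mono goodK_fin[OF g] integral_mono) (auto simp: intK_def)

lemma prob_add_const:
  assumes "prob_space M" "integrable M f"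
  shows "(\<integral>u. f u + c \<partial>M) = (\<integral>u. f u \<partial>M) + (c::real)"
proof -
  interpret prob_space M by fact
  show ?thesis using assms(2) by (simp add: Bochner_Integration.integral_add prob_space)
qed

lemma Ex_add_const:
  assumes g: "goodK Qb Kb" and f: "intK Qb Kb f"
  shows "ExK Qb Kb (\<lambda>u. f u + c) = ExK Qb Kb f + c"
proof -
  have "ExK Qb Kb (\<lambda>u. f u + c) = (\<integral>t. (\<integral>u. f u \<partial>Kb t) + c \<partial>measure_pmf Qb)"
    unfolding ExK_def using assms
    by (intro pmf_cong prob_add_const) (auto simp: intK_def goodK_def goodM_def)
  also have "\<dots> = ExK Qb Kb f + c" unfolding ExK_def by (rule pmf_add_const[OF goodK_fin[OF g]])
  finally show ?thesis .
qed

lemma Ex_const_add: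
  assumes g: "goodK Qb Kb" and f: "intK Qb Kb f"
  shows "ExK Qb Kb (\<lambda>u. c + f u) = c + ExK Qb Kb f"
  using Ex_add_const[OF assms, of c] by (simp add: add.commute)

lemma Ex_const:
  assumes g: "goodK Qb Kb"
  shows "ExK Qb Kb (\<lambda>u. c) = c"
proof -
  have "ExK Qb Kb (\<lambda>u. c) = (\<integral>t. c \<partial>measure_pmf Qb)"
    unfolding ExK_def using g
    by (intro pmf_cong) (auto simp: goodK_def goodM_def prob_space.prob_space)
  then show ?thesis by (simp add: pmf_const)
qed

lemma Ex_add:
  assumes g: "goodK Qb Kb" and "intK Qb Kb f" "intK Qb Kb h"
  shows "ExK Qb Kb (\<lambda>u. f u + h u) = ExK Qb Kb f + ExK Qb Kb h"
proof -
  have "ExK Qb Kb (\<lambda>u. f u + h u) = (\<integral>t. (\<integral>u. f u \<partial>Kb t) + (\<integral>u. h u \<partial>Kb t) \<partial>measure_pmf Qb)"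
    unfolding ExK_def using assms
    by (intro pmf_cong Bochner_Integration.integral_add) (auto simp: intK_def)
  also have "\<dots> = ExK Qb Kb f + ExK Qb Kb h" unfolding ExK_def by (rule pmf_add[OF goodK_fin[OF g]])
  finally show ?thesis .
qed

lemma Ex_return: "ExK (return_pmf t) Kb f = (\<integral>u. f u \<partial>Kb t)"
  unfolding ExK_def by (subst pmf_int_sum) auto

lemma goodK_return: "goodM (Kb t) \<Longrightarrow> goodK (return_pmf t) Kb"
  by (simp add: goodK_def)

lemma intK_inner:
  assumes g1: "goodK Q1 K1" and g2: "goodK Q2 K2" and n: "nice2 F"
  shows "intK Q1 K1 (\<lambda>v. ExK Q2 K2 (\<lambda>u. F u v))"
  unfolding intK_def ExK_def
proof
  fix t1 assume t1: "t1 \<in> set_pmf Q1"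
  show "integrable (K1 t1) (\<lambda>v. \<integral>t. (\<integral>u. F u v \<partial>K2 t) \<partial>measure_pmf Q2)"
    using goodK_fin[OF g2] inner_int[OF goodK_M[OF g1 t1] goodK_M[OF g2] n]
    by (intro pmf_int_integrable) auto
qed

lemma intK_pmf:
  assumes g: "goodK Qj Kj" and f: "finite (set_pmf Q1)" and n: "\<And>t1. t1 \<in> set_pmf Q1 \<Longrightarrow> nice1 (G t1)"
  shows "intK Qj Kj (\<lambda>u. \<integral>t1. G t1 u \<partial>measure_pmf Q1)"
  unfolding intK_def
proof
  fix t assume t: "t \<in> set_pmf Qj"
  show "integrable (Kj t) (\<lambda>u. \<integral>t1. G t1 u \<partial>measure_pmf Q1)"
    using f nice1_integrable[OF goodK_M[OF g t] n] by (intro pmf_int_integrable) auto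
qed

lemma GSwap:
  assumes g1: "goodK Q1 K1" and g2: "goodK Q2 K2" and n: "nice2 F"
  shows "ExK Q1 K1 (\<lambda>v. ExK Q2 K2 (\<lambda>u. F u v)) = ExK Q2 K2 (\<lambda>u. ExK Q1 K1 (\<lambda>v. F u v))"
proof -
  have f1: "finite (set_pmf Q1)" and f2: "finite (set_pmf Q2)" using g1 g2 by (auto simp: goodK_fin)
  have "ExK Q1 K1 (\<lambda>v. ExK Q2 K2 (\<lambda>u. F u v))
      = (\<integral>t1. (\<integral>t2. (\<integral>v. (\<integral>u. F u v \<partial>K2 t2) \<partial>K1 t1) \<partial>measure_pmf Q2) \<partial>measure_pmf Q1)"
    unfolding ExK_def
  proof (intro pmf_cong)
    fix t1 assume t1: "t1 \<in> set_pmf Q1"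
    show "(\<integral>v. (\<integral>t2. (\<integral>u. F u v \<partial>K2 t2) \<partial>measure_pmf Q2) \<partial>K1 t1)
        = (\<integral>t2. (\<integral>v. (\<integral>u. F u v \<partial>K2 t2) \<partial>K1 t1) \<partial>measure_pmf Q2)"
      using f2 inner_int[OF goodK_M[OF g1 t1] goodK_M[OF g2] n]
      by (intro pmf_K_swap[symmetric]) auto
  qed
  also have "\<dots> = (\<integral>t1. (\<integral>t2. (\<integral>u. (\<integral>v. F u v \<partial>K1 t1) \<partial>K2 t2) \<partial>measure_pmf Q2) \<partial>measure_pmf Q1)"
    using fubini_swap[OF goodK_M[OF g1] goodK_M[OF g2] n]
    by (intro pmf_cong) auto
  also have "\<dots> = (\<integral>t2. (\<integral>t1. (\<integral>u. (\<integral>v. F u v \<partial>K1 t1) \<partial>K2 t2) \<partial>measure_pmf Q1) \<partial>measure_pmf Q2)"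
    by (rule pmf_pmf_swap[OF f1 f2])
  also have "\<dots> = ExK Q2 K2 (\<lambda>u. ExK Q1 K1 (\<lambda>v. F u v))"
    unfolding ExK_def
  proof (intro pmf_cong)
    fix t2 assume t2: "t2 \<in> set_pmf Q2"
    show "(\<integral>t1. (\<integral>u. (\<integral>v. F u v \<partial>K1 t1) \<partial>K2 t2) \<partial>measure_pmf Q1)
        = (\<integral>u. (\<integral>t1. (\<integral>v. F u v \<partial>K1 t1) \<partial>measure_pmf Q1) \<partial>K2 t2)"
      using f1 inner_int[OF goodK_M[OF g2 t2] goodK_M[OF g1] nice2_swap[OF n]]
      by (intro pmf_K_swap) auto
  qed
  finally show ?thesis .
qed

lemma PSwap:
  assumes g2: "goodK Q2 K2" and f1: "finite (set_pmf Q1)" and n: "\<And>t1. t1 \<in> set_pmf Q1 \<Longrightarrow> nice1 (G t1)"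
  shows "(\<integral>t1. ExK Q2 K2 (G t1) \<partial>measure_pmf Q1) = ExK Q2 K2 (\<lambda>u. \<integral>t1. G t1 u \<partial>measure_pmf Q1)"
proof -
  have f2: "finite (set_pmf Q2)" using g2 by (auto simp: goodK_fin)
  have "(\<integral>t1. ExK Q2 K2 (G t1) \<partial>measure_pmf Q1)
      = (\<integral>t2. (\<integral>t1. (\<integral>u. G t1 u \<partial>K2 t2) \<partial>measure_pmf Q1) \<partial>measure_pmf Q2)"
    unfolding ExK_def by (rule pmf_pmf_swap[OF f1 f2])
  also have "\<dots> = ExK Q2 K2 (\<lambda>u. \<integral>t1. G t1 u \<partial>measure_pmf Q1)"
    unfolding ExK_def
  proof (intro pmf_cong)
    fix t2 assume t2: "t2 \<in> set_pmf Q2"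
    show "(\<integral>t1. (\<integral>u. G t1 u \<partial>K2 t2) \<partial>measure_pmf Q1) = (\<integral>u. (\<integral>t1. G t1 u \<partial>measure_pmf Q1) \<partial>K2 t2)"
      using f1 nice1_integrable[OF goodK_M[OF g2 t2] n]
      by (intro pmf_K_swap) auto
  qed
  finally show ?thesis .
qed




definition lip :: "(real \<Rightarrow> real) \<Rightarrow> bool" where
  "lip w \<longleftrightarrow> (\<forall>a b. a \<le> b \<longrightarrow> w a \<le> w b \<and> w b \<le> w a + (b - a))"

lemma lipD1: "lip w \<Longrightarrow> a \<le> b \<Longrightarrow> w a \<le> w b"
  by (simp add: lip_def)

lemma lipD2: "lip w \<Longrightarrow> a \<le> b \<Longrightarrow> w b \<le> w a + (b - a)"
  by (simp add: lip_def)

lemma lipI: "(\<And>a b. a \<le> b \<Longrightarrow> w a \<le> w b) \<Longrightarrow> (\<And>a b. a \<le> b \<Longrightarrow> w b \<le> w a + (b - a)) \<Longrightarrow> lip w"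
  by (simp add: lip_def)

lemma lip_dist:
  assumes l: "lip w" shows "\<bar>w x - w y\<bar> \<le> \<bar>x - y\<bar>"
proof (cases "x \<le> y")
  case True
  then have "w x \<le> w y" "w y \<le> w x + (y - x)" using lipD1[OF l] lipD2[OF l] by auto
  then show ?thesis using True by (simp add: abs_if)
next
  case False
  then have "y \<le> x" by simp
  then have "w y \<le> w x" "w x \<le> w y + (x - y)" using lipD1[OF l] lipD2[OF l] by auto
  then show ?thesis using \<open>y \<le> x\<close> by (simp add: abs_if)
qed

lemma lip_cont: "lip w \<Longrightarrow> continuous_on UNIV w"
proof -
  assume l: "lip w"
  have "1-lipschitz_on UNIV w"
    by (rule lipschitz_onI) (auto simp: dist_real_def lip_dist[OF l])
  then show ?thesis by (rule lipschitz_on_continuous_on)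
qed

lemma lip_bound: "lip w \<Longrightarrow> \<bar>w z\<bar> \<le> \<bar>w 0\<bar> + \<bar>z\<bar>"
  using lip_dist[of w z 0] by simp

lemma lip_comp1:
  assumes l: "lip w" and c: "continuous_on UNIV g" and b: "\<And>v. \<bar>g v\<bar> \<le> A + \<bar>v\<bar>"
  shows "nice1 (\<lambda>v. w (g v))"
proof -
  have c1: "continuous_on UNIV (w \<circ> g)"
    by (rule continuous_on_compose[OF c continuous_on_subset[OF lip_cont[OF l]]]) auto
  have bd: "\<bar>w (g v)\<bar> \<le> (\<bar>w 0\<bar> + \<bar>A\<bar> + 1) + (\<bar>w 0\<bar> + \<bar>A\<bar> + 1) * \<bar>v\<bar>" for v
  proof -
    have "\<bar>w (g v)\<bar> \<le> \<bar>w 0\<bar> + \<bar>A\<bar> + \<bar>v\<bar>" using lip_bound[OF l, of "g v"] b[of v] by linarith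
    moreover have "\<bar>v\<bar> \<le> (\<bar>w 0\<bar> + \<bar>A\<bar> + 1) * \<bar>v\<bar>"
    proof -
      have "1 * \<bar>v\<bar> \<le> (\<bar>w 0\<bar> + \<bar>A\<bar> + 1) * \<bar>v\<bar>" by (rule mult_right_mono) auto
      then show ?thesis by simp
    qed
    ultimately show ?thesis by linarith
  qed
  have cont: "continuous_on UNIV (\<lambda>v. w (g v))"
    using c1 unfolding o_def .
  show ?thesis unfolding nice1_def
    by (intro conjI exI[of _ "\<bar>w 0\<bar> + \<bar>A\<bar> + 1"] allI cont bd)
qed

lemma lip_comp2:
  assumes l: "lip w" and c: "continuous_on UNIV (\<lambda>p. g (fst p) (snd p))"
    and b: "\<And>u v. \<bar>g u v\<bar> \<le> A + \<bar>u\<bar> + \<bar>v\<bar>"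
  shows "nice2 (\<lambda>u v. w (g u v))"
proof -
  have c1: "continuous_on UNIV (w \<circ> (\<lambda>p. g (fst p) (snd p)))"
    by (rule continuous_on_compose[OF c continuous_on_subset[OF lip_cont[OF l]]]) auto
  have bd: "\<bar>w (g u v)\<bar> \<le> (\<bar>w 0\<bar> + \<bar>A\<bar> + 1) + (\<bar>w 0\<bar> + \<bar>A\<bar> + 1) * \<bar>u\<bar> + (\<bar>w 0\<bar> + \<bar>A\<bar> + 1) * \<bar>v\<bar>" for u v
  proof -
    have "\<bar>w (g u v)\<bar> \<le> \<bar>w 0\<bar> + \<bar>A\<bar> + \<bar>u\<bar> + \<bar>v\<bar>" using lip_bound[OF l, of "g u v"] b[of u v] by linarith
    moreover have "\<bar>v\<bar> \<le> (\<bar>w 0\<bar> + \<bar>A\<bar> + 1) * \<bar>v\<bar>" "\<bar>u\<bar> \<le> (\<bar>w 0\<bar> + \<bar>A\<bar> + 1) * \<bar>u\<bar>"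
    proof -
      have "1 * \<bar>v\<bar> \<le> (\<bar>w 0\<bar> + \<bar>A\<bar> + 1) * \<bar>v\<bar>" "1 * \<bar>u\<bar> \<le> (\<bar>w 0\<bar> + \<bar>A\<bar> + 1) * \<bar>u\<bar>"
        by (rule mult_right_mono, simp, simp)+
      then show "\<bar>v\<bar> \<le> (\<bar>w 0\<bar> + \<bar>A\<bar> + 1) * \<bar>v\<bar>" "\<bar>u\<bar> \<le> (\<bar>w 0\<bar> + \<bar>A\<bar> + 1) * \<bar>u\<bar>" by simp_all
    qed
    ultimately show ?thesis by linarith
  qed
  have cont: "continuous_on UNIV (\<lambda>p. w (g (fst p) (snd p)))"
    using c1 unfolding o_def .
  show ?thesis unfolding nice2_def
    by (intro conjI exI[of _ "\<bar>w 0\<bar> + \<bar>A\<bar> + 1"] allI cont bd)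
qed

lemma nice_max: "lip w \<Longrightarrow> nice1 (\<lambda>v. w (max y v))"
proof (rule lip_comp1[of w "\<lambda>v. max y v" "\<bar>y\<bar>"])
  show "continuous_on UNIV (\<lambda>v. max y v)" by (intro continuous_on_max continuous_on_min continuous_on_diff continuous_on_id continuous_on_const continuous_on_fst continuous_on_snd)
  show "\<bar>max y v\<bar> \<le> \<bar>y\<bar> + \<bar>v\<bar>" for v by (cases "y \<le> v") (auto simp: max_def)
qed

lemma nice_cap: "lip w \<Longrightarrow> nice1 (\<lambda>u. w (max y (min u \<sigma>)))"
proof (rule lip_comp1[of w "\<lambda>u. max y (min u \<sigma>)" "\<bar>y\<bar> + \<bar>\<sigma>\<bar>"])
  show "continuous_on UNIV (\<lambda>u. max y (min u \<sigma>))" by (intro continuous_on_max continuous_on_min continuous_on_diff continuous_on_id continuous_on_const continuous_on_fst continuous_on_snd)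
  show "\<bar>max y (min v \<sigma>)\<bar> \<le> \<bar>y\<bar> + \<bar>\<sigma>\<bar> + \<bar>v\<bar>" for v
    by (cases "y \<le> min v \<sigma>"; cases "v \<le> \<sigma>") (auto simp: max_def min_def)
qed

lemma nice_F: "lip w \<Longrightarrow> nice2 (\<lambda>u v. w (max (max y v) (min u \<sigma>)))"
proof (rule lip_comp2[of w "\<lambda>u v. max (max y v) (min u \<sigma>)" "\<bar>y\<bar> + \<bar>\<sigma>\<bar>"])
  show "continuous_on UNIV (\<lambda>p. max (max y (snd p)) (min (fst p) \<sigma>))" by (intro continuous_on_max continuous_on_min continuous_on_diff continuous_on_id continuous_on_const continuous_on_fst continuous_on_snd)
  show "\<bar>max (max y v) (min u \<sigma>)\<bar> \<le> \<bar>y\<bar> + \<bar>\<sigma>\<bar> + \<bar>u\<bar> + \<bar>v\<bar>" for u v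
    by (cases "max y v \<le> min u \<sigma>"; cases "u \<le> \<sigma>"; cases "y \<le> v") (auto simp: max_def min_def)
qed

lemma nice_pos: "nice1 (\<lambda>v. max 0 (v - \<sigma>))"
  unfolding nice1_def
proof (intro conjI exI allI)
  show "continuous_on UNIV (\<lambda>v. max 0 (v - \<sigma>))" by (intro continuous_on_max continuous_on_min continuous_on_diff continuous_on_id continuous_on_const continuous_on_fst continuous_on_snd)
  fix v :: real
  have a: "\<bar>max 0 (v - \<sigma>)\<bar> \<le> \<bar>\<sigma>\<bar> + \<bar>v\<bar>" by (cases "0 \<le> v - \<sigma>") (auto simp: max_def)
  have "1 * \<bar>v\<bar> \<le> (\<bar>\<sigma>\<bar> + 1) * \<bar>v\<bar>" by (rule mult_right_mono) auto
  with a show "\<bar>max 0 (v - \<sigma>)\<bar> \<le> (\<bar>\<sigma>\<bar> + 1) + (\<bar>\<sigma>\<bar> + 1) * \<bar>v\<bar>" by linarith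
qed

lemma nice_maxid: "nice1 (\<lambda>v. max z v)"
proof -
  have "lip (\<lambda>x. x)" by (rule lipI) auto
  from nice_max[OF this, of z] show ?thesis by simp
qed

lemma intK_add_const:
  assumes g: "goodK Qb Kb" and f: "intK Qb Kb f"
  shows "intK Qb Kb (\<lambda>u. f u + c)"
  unfolding intK_def
proof
  fix t assume t: "t \<in> set_pmf Qb"
  interpret prob_space "Kb t" using goodK_M[OF g t] goodM_prob by blast
  show "integrable (Kb t) (\<lambda>u. f u + c)" using f t by (auto simp: intK_def)
qed

lemma lip_const_add: "lip f \<Longrightarrow> lip (\<lambda>y. c + f y)"
  by (simp add: lip_def)

lemma lip_Ex_max:
  assumes g: "goodK Qb Kb" and l: "lip w"
  shows "lip (\<lambda>y. ExK Qb Kb (\<lambda>v. w (max y v)))"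
proof (rule lipI)
  fix a b :: real assume ab: "a \<le> b"
  show "ExK Qb Kb (\<lambda>v. w (max a v)) \<le> ExK Qb Kb (\<lambda>v. w (max b v))"
  proof (rule Ex_mono[OF g nice1_intK[OF g nice_max[OF l]] nice1_intK[OF g nice_max[OF l]]])
    fix v show "w (max a v) \<le> w (max b v)" by (rule lipD1[OF l]) (use ab in auto)
  qed
  have "ExK Qb Kb (\<lambda>v. w (max b v)) \<le> ExK Qb Kb (\<lambda>v. w (max a v) + (b - a))"
  proof (rule Ex_mono[OF g])
    show "intK Qb Kb (\<lambda>v. w (max b v))" by (rule nice1_intK[OF g nice_max[OF l]])
    show "intK Qb Kb (\<lambda>v. w (max a v) + (b - a))" by (rule intK_add_const[OF g nice1_intK[OF g nice_max[OF l]]])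
    fix v
    have "max a v \<le> max b v" "max b v - max a v \<le> b - a" using ab by auto
    then show "w (max b v) \<le> w (max a v) + (b - a)" using lipD2[OF l, of "max a v" "max b v"] by linarith
  qed
  also have "\<dots> = ExK Qb Kb (\<lambda>v. w (max a v)) + (b - a)"
    by (rule Ex_add_const[OF g nice1_intK[OF g nice_max[OF l]]])
  finally show "ExK Qb Kb (\<lambda>v. w (max b v)) \<le> ExK Qb Kb (\<lambda>v. w (max a v)) + (b - a)" .
qed

lemma lip_pmf:
  assumes f: "finite (set_pmf p)" and l: "\<And>t. t \<in> set_pmf p \<Longrightarrow> lip (w t)"
  shows "lip (\<lambda>y. \<integral>t. w t y \<partial>measure_pmf p)"
proof (rule lipI)
  fix a b :: real assume ab: "a \<le> b"
  show "(\<integral>t. w t a \<partial>measure_pmf p) \<le> (\<integral>t. w t b \<partial>measure_pmf p)"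
  proof (rule pmf_mono[OF f])
    fix t assume "t \<in> set_pmf p" then show "w t a \<le> w t b" using lipD1[OF l ab] by blast
  qed
  have "(\<integral>t. w t b \<partial>measure_pmf p) \<le> (\<integral>t. w t a + (b - a) \<partial>measure_pmf p)"
  proof (rule pmf_mono[OF f])
    fix t assume "t \<in> set_pmf p" then show "w t b \<le> w t a + (b - a)" using lipD2[OF l ab] by blast
  qed
  also have "\<dots> = (\<integral>t. w t a \<partial>measure_pmf p) + (b - a)" by (rule pmf_add_const[OF f])
  finally show "(\<integral>t. w t b \<partial>measure_pmf p) \<le> (\<integral>t. w t a \<partial>measure_pmf p) + (b - a)" .
qed

lemma lip_own: "lip w \<Longrightarrow> w (max y v) \<le> w (max y (min v \<sigma>)) + max 0 (v - \<sigma>)"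
proof -
  assume l: "lip w"
  have "max y (min v \<sigma>) \<le> max y v" by auto
  from lipD2[OF l this] have "w (max y v) \<le> w (max y (min v \<sigma>)) + (max y v - max y (min v \<sigma>))" .
  moreover have "max y v - max y (min v \<sigma>) \<le> max 0 (v - \<sigma>)" by auto
  ultimately show ?thesis by linarith
qed




locale pbox =
  fixes Q :: "'b \<Rightarrow> 't pmf" and K :: "'b \<Rightarrow> 't \<Rightarrow> real measure" and cF cP :: "'b \<Rightarrow> real"
    and B :: "'b set"
  assumes finB: "finite B"
    and finGamma: "\<And>b. b \<in> B \<Longrightarrow> finite (set_pmf (Q b))"
    and probK: "\<And>b t. b \<in> B \<Longrightarrow> t \<in> set_pmf (Q b) \<Longrightarrow> prob_space (K b t)"
    and borelK: "\<And>b t. b \<in> B \<Longrightarrow> t \<in> set_pmf (Q b) \<Longrightarrow> sets (K b t) = sets borel"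
    and intKK: "\<And>b t. b \<in> B \<Longrightarrow> t \<in> set_pmf (Q b) \<Longrightarrow> integrable (K b t) (\<lambda>v. v)"
begin

lemma goodMb: "b \<in> B \<Longrightarrow> t \<in> set_pmf (Q b) \<Longrightarrow> goodM (K b t)"
  by (simp add: goodM_def probK borelK intKK)

lemma goodKb: "b \<in> B \<Longrightarrow> goodK (Q b) (K b)"
  by (simp add: goodK_def goodMb finGamma)

abbreviation W where "W n C P y \<equiv> pb_W Q K cF cP n C P y"

definition wf :: "'b set \<Rightarrow> ('b \<rightharpoonup> 't) \<Rightarrow> bool" where
  "wf C P \<longleftrightarrow> C \<union> dom P \<subseteq> B \<and> C \<inter> dom P = {} \<and> (\<forall>j\<in>dom P. the (P j) \<in> set_pmf (Q j))"

definition AF :: "nat \<Rightarrow> 'b set \<Rightarrow> ('b \<rightharpoonup> 't) \<Rightarrow> real \<Rightarrow> 'b \<Rightarrow> real" where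
  "AF n C P y i = - cF i + ExK (Q i) (K i) (\<lambda>v. W n (C - {i}) P (max y v))"

definition AP :: "nat \<Rightarrow> 'b set \<Rightarrow> ('b \<rightharpoonup> 't) \<Rightarrow> real \<Rightarrow> 'b \<Rightarrow> real" where
  "AP n C P y i = - cP i + (\<integral>t. W n (C - {i}) (P(i \<mapsto> t)) y \<partial>measure_pmf (Q i))"

definition AFP :: "nat \<Rightarrow> 'b set \<Rightarrow> ('b \<rightharpoonup> 't) \<Rightarrow> real \<Rightarrow> 'b \<Rightarrow> real" where
  "AFP n C P y j = - cF j + ExK (return_pmf (the (P j))) (K j) (\<lambda>v. W n C (P(j := None)) (max y v))"

lemma W_Suc: "W (Suc n) C P y = Max ({y} \<union> (\<lambda>i. AF n C P y i) ` C \<union> (\<lambda>i. AP n C P y i) ` C \<union> (\<lambda>j. AFP n C P y j) ` dom P)"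
  unfolding AF_def AP_def AFP_def Ex_return by (simp add: ExK_def)

lemma wf_fin: "wf C P \<Longrightarrow> finite C \<and> finite (dom P)"
  unfolding wf_def using finB by (meson finite_subset le_sup_iff)

lemma W_Suc_le:
  assumes "wf C P"
  shows "W (Suc n) C P y \<le> z \<longleftrightarrow> y \<le> z \<and> (\<forall>i\<in>C. AF n C P y i \<le> z) \<and> (\<forall>i\<in>C. AP n C P y i \<le> z)
           \<and> (\<forall>j\<in>dom P. AFP n C P y j \<le> z)"
proof -
  have f: "finite ({y} \<union> (\<lambda>i. AF n C P y i) ` C \<union> (\<lambda>i. AP n C P y i) ` C \<union> (\<lambda>j. AFP n C P y j) ` dom P)"
    using wf_fin[OF assms] by simp
  have ne: "{y} \<union> (\<lambda>i. AF n C P y i) ` C \<union> (\<lambda>i. AP n C P y i) ` C \<union> (\<lambda>j. AFP n C P y j) ` dom P \<noteq> {}" by simp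
  have "W (Suc n) C P y \<le> z \<longleftrightarrow> (\<forall>a\<in>{y} \<union> (\<lambda>i. AF n C P y i) ` C \<union> (\<lambda>i. AP n C P y i) ` C \<union> (\<lambda>j. AFP n C P y j) ` dom P. a \<le> z)"
    unfolding W_Suc by (rule Max_le_iff[OF f ne])
  also have "\<dots> \<longleftrightarrow> y \<le> z \<and> (\<forall>i\<in>C. AF n C P y i \<le> z) \<and> (\<forall>i\<in>C. AP n C P y i \<le> z)
           \<and> (\<forall>j\<in>dom P. AFP n C P y j \<le> z)" by blast
  finally show ?thesis .
qed

lemma W_ge_y: "wf C P \<Longrightarrow> y \<le> W (Suc n) C P y"
  using W_Suc_le[of C P n y "W (Suc n) C P y"] by simp

lemma W_ge_AF: "wf C P \<Longrightarrow> i \<in> C \<Longrightarrow> AF n C P y i \<le> W (Suc n) C P y"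
  using W_Suc_le[of C P n y "W (Suc n) C P y"] by simp

lemma W_ge_AP: "wf C P \<Longrightarrow> i \<in> C \<Longrightarrow> AP n C P y i \<le> W (Suc n) C P y"
  using W_Suc_le[of C P n y "W (Suc n) C P y"] by simp

lemma W_ge_AFP: "wf C P \<Longrightarrow> j \<in> dom P \<Longrightarrow> AFP n C P y j \<le> W (Suc n) C P y"
  using W_Suc_le[of C P n y "W (Suc n) C P y"] by simp

lemma wf_F: "wf C P \<Longrightarrow> i \<in> C \<Longrightarrow> wf (C - {i}) P"
  unfolding wf_def by auto

lemma wf_P: "wf C P \<Longrightarrow> i \<in> C \<Longrightarrow> t \<in> set_pmf (Q i) \<Longrightarrow> wf (C - {i}) (P(i \<mapsto> t))"
  unfolding wf_def by auto

lemma wf_FP: "wf C P \<Longrightarrow> wf C (P(j := None))"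
  unfolding wf_def by auto

lemma wf_BC: "wf C P \<Longrightarrow> i \<in> C \<Longrightarrow> i \<in> B"
  unfolding wf_def by auto

lemma wf_BP: "wf C P \<Longrightarrow> j \<in> dom P \<Longrightarrow> j \<in> B"
  unfolding wf_def by auto

lemma wf_T: "wf C P \<Longrightarrow> j \<in> dom P \<Longrightarrow> the (P j) \<in> set_pmf (Q j)"
  unfolding wf_def by auto

lemma goodK_P: "wf C P \<Longrightarrow> j \<in> dom P \<Longrightarrow> goodK (return_pmf (the (P j))) (K j)"
  by (intro goodK_return goodMb wf_BP wf_T)

lemma lip_W_Suc:
  assumes wf: "wf C P"
    and lAF: "\<And>i. i \<in> C \<Longrightarrow> lip (\<lambda>y. AF n C P y i)"
    and lAP: "\<And>i. i \<in> C \<Longrightarrow> lip (\<lambda>y. AP n C P y i)"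
    and lAFP: "\<And>j. j \<in> dom P \<Longrightarrow> lip (\<lambda>y. AFP n C P y j)"
  shows "lip (W (Suc n) C P)"
proof (rule lipI)
  fix a b :: real assume ab: "a \<le> b"
  show "W (Suc n) C P a \<le> W (Suc n) C P b"
    unfolding W_Suc_le[OF wf]
  proof (intro conjI ballI)
    show "a \<le> W (Suc n) C P b" using ab W_ge_y[OF wf, where n=n and y=b] by linarith
    fix i assume i: "i \<in> C"
    show "AF n C P a i \<le> W (Suc n) C P b"
      using lipD1[OF lAF[OF i] ab] W_ge_AF[OF wf i, where n=n and y=b] by linarith
    show "AP n C P a i \<le> W (Suc n) C P b"
      using lipD1[OF lAP[OF i] ab] W_ge_AP[OF wf i, where n=n and y=b] by linarith
  next
    fix j assume j: "j \<in> dom P"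
    show "AFP n C P a j \<le> W (Suc n) C P b"
      using lipD1[OF lAFP[OF j] ab] W_ge_AFP[OF wf j, where n=n and y=b] by linarith
  qed
  show "W (Suc n) C P b \<le> W (Suc n) C P a + (b - a)"
    unfolding W_Suc_le[OF wf]
  proof (intro conjI ballI)
    show "b \<le> W (Suc n) C P a + (b - a)" using W_ge_y[OF wf, where n=n and y=a] by linarith
    fix i assume i: "i \<in> C"
    show "AF n C P b i \<le> W (Suc n) C P a + (b - a)"
      using lipD2[OF lAF[OF i] ab] W_ge_AF[OF wf i, where n=n and y=a] by linarith
    show "AP n C P b i \<le> W (Suc n) C P a + (b - a)"
      using lipD2[OF lAP[OF i] ab] W_ge_AP[OF wf i, where n=n and y=a] by linarith
  next
    fix j assume j: "j \<in> dom P"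
    show "AFP n C P b j \<le> W (Suc n) C P a + (b - a)"
      using lipD2[OF lAFP[OF j] ab] W_ge_AFP[OF wf j, where n=n and y=a] by linarith
  qed
qed

lemma REG: "wf C P \<Longrightarrow> lip (W n C P) \<and> (\<forall>y. y \<le> W n C P y)"
proof (induction n arbitrary: C P)
  case 0
  have "lip (\<lambda>y. y)" by (rule lipI) auto
  then show ?case by simp
next
  case (Suc n)
  have wf: "wf C P" by fact
  have "lip (W (Suc n) C P)"
  proof (rule lip_W_Suc[OF wf])
    fix i assume i: "i \<in> C"
    show "lip (\<lambda>y. AF n C P y i)" unfolding AF_def
      by (rule lip_const_add[OF lip_Ex_max[OF goodKb[OF wf_BC[OF wf i]] conjunct1[OF Suc.IH[OF wf_F[OF wf i]]]]])
    show "lip (\<lambda>y. AP n C P y i)" unfolding AP_def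
      by (rule lip_const_add[OF lip_pmf[OF finGamma[OF wf_BC[OF wf i]]]])
         (rule conjunct1[OF Suc.IH[OF wf_P[OF wf i]]])
  next
    fix j assume j: "j \<in> dom P"
    show "lip (\<lambda>y. AFP n C P y j)" unfolding AFP_def
      by (rule lip_const_add[OF lip_Ex_max[OF goodK_P[OF wf j] conjunct1[OF Suc.IH[OF wf_FP[OF wf]]]]])
  qed
  moreover have "\<forall>y. y \<le> W (Suc n) C P y" using W_ge_y[OF wf] by blast
  ultimately show ?case by blast
qed

lemma lipW: "wf C P \<Longrightarrow> lip (W n C P)"
  using REG by blast

lemma W_ge: "wf C P \<Longrightarrow> y \<le> W n C P y"
  using REG by blast

lemma AF_mono_W:
  assumes wf: "wf C P" and i: "i \<in> C" and le: "\<And>z. W n (C - {i}) P z \<le> W m (C - {i}) P z"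
  shows "AF n C P y i \<le> AF m C P y i"
proof -
  have g: "goodK (Q i) (K i)" by (rule goodKb[OF wf_BC[OF wf i]])
  have "ExK (Q i) (K i) (\<lambda>v. W n (C - {i}) P (max y v)) \<le> ExK (Q i) (K i) (\<lambda>v. W m (C - {i}) P (max y v))"
    by (rule Ex_mono[OF g nice1_intK[OF g nice_max[OF lipW[OF wf_F[OF wf i]]]]
          nice1_intK[OF g nice_max[OF lipW[OF wf_F[OF wf i]]]] le])
  then show ?thesis unfolding AF_def by linarith
qed

lemma AP_mono_W:
  assumes wf: "wf C P" and i: "i \<in> C"
    and le: "\<And>t z. t \<in> set_pmf (Q i) \<Longrightarrow> W n (C - {i}) (P(i \<mapsto> t)) z \<le> W m (C - {i}) (P(i \<mapsto> t)) z"
  shows "AP n C P y i \<le> AP m C P y i"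
proof -
  have "(\<integral>t. W n (C - {i}) (P(i \<mapsto> t)) y \<partial>measure_pmf (Q i)) \<le> (\<integral>t. W m (C - {i}) (P(i \<mapsto> t)) y \<partial>measure_pmf (Q i))"
    by (rule pmf_mono[OF finGamma[OF wf_BC[OF wf i]] le])
  then show ?thesis unfolding AP_def by linarith
qed

lemma AFP_mono_W:
  assumes wf: "wf C P" and j: "j \<in> dom P" and le: "\<And>z. W n C (P(j := None)) z \<le> W m C (P(j := None)) z"
  shows "AFP n C P y j \<le> AFP m C P y j"
proof -
  have g: "goodK (return_pmf (the (P j))) (K j)" by (rule goodK_P[OF wf j])
  have "ExK (return_pmf (the (P j))) (K j) (\<lambda>v. W n C (P(j := None)) (max y v)) \<le> ExK (return_pmf (the (P j))) (K j) (\<lambda>v. W m C (P(j := None)) (max y v))"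
    by (rule Ex_mono[OF g nice1_intK[OF g nice_max[OF lipW[OF wf_FP[OF wf]]]]
          nice1_intK[OF g nice_max[OF lipW[OF wf_FP[OF wf]]]] le])
  then show ?thesis unfolding AFP_def by linarith
qed

lemma FM: "wf C P \<Longrightarrow> W n C P y \<le> W (Suc n) C P y"
proof (induction n arbitrary: C P y)
  case 0
  have e: "W 0 C P y = y" by simp
  show ?case using e W_ge_y[OF 0, where n=0 and y=y] by linarith
next
  case (Suc n)
  have wf: "wf C P" by fact
  show ?case unfolding W_Suc_le[OF wf]
  proof (intro conjI ballI)
    show "y \<le> W (Suc (Suc n)) C P y" by (rule W_ge_y[OF wf])
    fix i assume i: "i \<in> C"
    show "AF n C P y i \<le> W (Suc (Suc n)) C P y"
      using AF_mono_W[OF wf i Suc.IH[OF wf_F[OF wf i]], of y] W_ge_AF[OF wf i, where n="Suc n" and y=y] by linarith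
    show "AP n C P y i \<le> W (Suc (Suc n)) C P y"
      using AP_mono_W[OF wf i Suc.IH[OF wf_P[OF wf i]], of y] W_ge_AP[OF wf i, where n="Suc n" and y=y] by linarith
  next
    fix j assume j: "j \<in> dom P"
    show "AFP n C P y j \<le> W (Suc (Suc n)) C P y"
      using AFP_mono_W[OF wf j Suc.IH[OF wf_FP[OF wf]], of y] W_ge_AFP[OF wf j, where n="Suc n" and y=y] by linarith
  qed
qed

lemma FM2:
  assumes "n \<le> m" "wf C P"
  shows "W n C P y \<le> W m C P y"
  using assms(1)
proof (induction rule: dec_induct)
  case base then show ?case by simp
next
  case (step k) then show ?case using FM[OF assms(2), of k y] by linarith
qed

definition need :: "'b set \<Rightarrow> ('b \<rightharpoonup> 't) \<Rightarrow> nat" where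
  "need C P = 2 * card C + card (dom P)"

lemma need_F: "wf C P \<Longrightarrow> i \<in> C \<Longrightarrow> need (C - {i}) P + 2 = need C P"
proof -
  assume wf: "wf C P" and i: "i \<in> C"
  have f: "finite C" using wf_fin[OF wf] by auto
  have c: "card C = Suc (card (C - {i}))" using card_Suc_Diff1[of C i] f i by (simp only:)
  show ?thesis unfolding need_def using c by simp
qed

lemma need_P: "wf C P \<Longrightarrow> i \<in> C \<Longrightarrow> need (C - {i}) (P(i \<mapsto> t)) + 1 = need C P"
proof -
  assume wf: "wf C P" and i: "i \<in> C"
  have ni: "i \<notin> dom P" using wf i unfolding wf_def by auto
  have f: "finite C" "finite (dom P)" using wf_fin[OF wf] by auto
  have c: "card C = Suc (card (C - {i}))" using card_Suc_Diff1[of C i] f i by (simp only:)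
  have d: "card (dom (P(i \<mapsto> t))) = Suc (card (dom P))" using f ni by simp
  show ?thesis unfolding need_def using c d by simp
qed

lemma need_FP: "wf C P \<Longrightarrow> j \<in> dom P \<Longrightarrow> need C (P(j := None)) + 1 = need C P"
proof -
  assume wf: "wf C P" and j: "j \<in> dom P"
  have f: "finite (dom P)" using wf_fin[OF wf] by auto
  have d: "card (dom P) = Suc (card (dom P - {j}))" using card_Suc_Diff1[of "dom P" j] f j by (simp only:)
  show ?thesis unfolding need_def using d by simp
qed

lemma SAT_le: "wf C P \<Longrightarrow> need C P \<le> n \<Longrightarrow> W n C P y \<le> W (need C P) C P y"
proof (induction n arbitrary: C P y)
  case 0 then show ?case by simp
next
  case (Suc n)
  have wf: "wf C P" by fact
  show ?case
  proof (cases "need C P = 0")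
    case True
    then have "C = {}" "dom P = {}" using wf_fin[OF wf] unfolding need_def by auto
    then have "W (Suc n) C P y \<le> y" unfolding W_Suc_le[OF wf] by simp
    then show ?thesis using True by simp
  next
    case False
    then obtain m where m: "need C P = Suc m" by (cases "need C P") auto
    have mn: "m \<le> n" using m Suc.prems(2) by simp
    show ?thesis unfolding m W_Suc_le[OF wf]
    proof (intro conjI ballI)
      show "y \<le> W (Suc m) C P y" by (rule W_ge_y[OF wf])
      fix i assume i: "i \<in> C"
      have "AF n C P y i \<le> AF m C P y i"
      proof (rule AF_mono_W[OF wf i])
        fix z
        have w': "wf (C - {i}) P" by (rule wf_F[OF wf i])
        have e: "need (C - {i}) P + 2 = need C P" by (rule need_F[OF wf i])
        have "W n (C - {i}) P z \<le> W (need (C - {i}) P) (C - {i}) P z"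
          by (rule Suc.IH[OF w']) (use e mn m in simp)
        also have "\<dots> \<le> W m (C - {i}) P z" using FM2[OF _ w'] e m by simp
        finally show "W n (C - {i}) P z \<le> W m (C - {i}) P z" .
      qed
      then show "AF n C P y i \<le> W (Suc m) C P y" using W_ge_AF[OF wf i, where n=m and y=y] by linarith
      have "AP n C P y i \<le> AP m C P y i"
      proof (rule AP_mono_W[OF wf i])
        fix t z assume t: "t \<in> set_pmf (Q i)"
        have w': "wf (C - {i}) (P(i \<mapsto> t))" by (rule wf_P[OF wf i t])
        have e: "need (C - {i}) (P(i \<mapsto> t)) + 1 = need C P" by (rule need_P[OF wf i])
        have em: "need (C - {i}) (P(i \<mapsto> t)) = m" using e m by simp
        have "W n (C - {i}) (P(i \<mapsto> t)) z \<le> W (need (C - {i}) (P(i \<mapsto> t))) (C - {i}) (P(i \<mapsto> t)) z"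
          by (rule Suc.IH[OF w']) (simp only: em mn)
        also have "\<dots> = W m (C - {i}) (P(i \<mapsto> t)) z" by (simp only: em)
        finally show "W n (C - {i}) (P(i \<mapsto> t)) z \<le> W m (C - {i}) (P(i \<mapsto> t)) z" .
      qed
      then show "AP n C P y i \<le> W (Suc m) C P y" using W_ge_AP[OF wf i, where n=m and y=y] by linarith
    next
      fix j assume j: "j \<in> dom P"
      have "AFP n C P y j \<le> AFP m C P y j"
      proof (rule AFP_mono_W[OF wf j])
        fix z
        have w': "wf C (P(j := None))" by (rule wf_FP[OF wf])
        have e: "need C (P(j := None)) + 1 = need C P" by (rule need_FP[OF wf j])
        have em: "need C (P(j := None)) = m" using e m by simp
        have "W n C (P(j := None)) z \<le> W (need C (P(j := None))) C (P(j := None)) z"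
          by (rule Suc.IH[OF w']) (simp only: em mn)
        also have "\<dots> = W m C (P(j := None)) z" by (simp only: em)
        finally show "W n C (P(j := None)) z \<le> W m C (P(j := None)) z" .
      qed
      then show "AFP n C P y j \<le> W (Suc m) C P y" using W_ge_AFP[OF wf j, where n=m and y=y] by linarith
    qed
  qed
qed

lemma SAT: "wf C P \<Longrightarrow> need C P \<le> n \<Longrightarrow> W n C P y = W (need C P) C P y"
  using SAT_le FM2 by (meson antisym)

end



lemma intK_const:
  assumes g: "goodK Qb Kb"
  shows "intK Qb Kb (\<lambda>u. c)"
  unfolding intK_def
proof
  fix t assume t: "t \<in> set_pmf Qb"
  interpret prob_space "Kb t" using goodK_M[OF g t] goodM_prob by blast
  show "integrable (Kb t) (\<lambda>u. c)" by simp
qed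

lemma Ex_ge_const:
  assumes g: "goodK Qb Kb" and f: "intK Qb Kb f" and le: "\<And>u. c \<le> f u"
  shows "c \<le> ExK Qb Kb f"
proof -
  have "ExK Qb Kb (\<lambda>u. c) \<le> ExK Qb Kb f" by (rule Ex_mono[OF g intK_const[OF g] f le])
  then show ?thesis using Ex_const[OF g, of c] by simp
qed

lemma max_swap: "max (max y v) (min u (s::real)) = max (max y (min u s)) v"
  by (simp add: max_def min_def)

lemma OA_F:
  assumes g1: "goodK Q1 K1" and gj: "goodK Qj Kj" and l1: "lip w1" and l2: "lip w2"
    and ih: "\<And>z. w1 z \<le> ExK Qj Kj (\<lambda>u. w2 (max z (min u \<sigma>))) + m"
  shows "c + ExK Q1 K1 (\<lambda>v. w1 (max y v))
       \<le> m + ExK Qj Kj (\<lambda>u. c + ExK Q1 K1 (\<lambda>v. w2 (max (max y (min u \<sigma>)) v)))"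
proof -
  define F where "F = (\<lambda>u v. w2 (max (max y v) (min u \<sigma>)))"
  have nF: "nice2 F" unfolding F_def by (rule nice_F[OF l2])
  have iF: "intK Q1 K1 (\<lambda>v. ExK Qj Kj (\<lambda>u. F u v))" by (rule intK_inner[OF g1 gj nF])
  have "ExK Q1 K1 (\<lambda>v. w1 (max y v)) \<le> ExK Q1 K1 (\<lambda>v. ExK Qj Kj (\<lambda>u. F u v) + m)"
  proof (rule Ex_mono[OF g1 nice1_intK[OF g1 nice_max[OF l1]] intK_add_const[OF g1 iF]])
    fix v show "w1 (max y v) \<le> ExK Qj Kj (\<lambda>u. F u v) + m" unfolding F_def by (rule ih)
  qed
  also have "\<dots> = ExK Q1 K1 (\<lambda>v. ExK Qj Kj (\<lambda>u. F u v)) + m" by (rule Ex_add_const[OF g1 iF])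
  also have "ExK Q1 K1 (\<lambda>v. ExK Qj Kj (\<lambda>u. F u v)) = ExK Qj Kj (\<lambda>u. ExK Q1 K1 (\<lambda>v. F u v))"
    by (rule GSwap[OF g1 gj nF])
  also have "(\<lambda>u. ExK Q1 K1 (\<lambda>v. F u v)) = (\<lambda>u. ExK Q1 K1 (\<lambda>v. w2 (max (max y (min u \<sigma>)) v)))"
    unfolding F_def max_swap ..
  finally have 1: "ExK Q1 K1 (\<lambda>v. w1 (max y v)) \<le> ExK Qj Kj (\<lambda>u. ExK Q1 K1 (\<lambda>v. w2 (max (max y (min u \<sigma>)) v))) + m" .
  have iG: "intK Qj Kj (\<lambda>u. ExK Q1 K1 (\<lambda>v. F u v))"
    using intK_inner[OF gj g1 nice2_swap[OF nF]] by simp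
  then have iG': "intK Qj Kj (\<lambda>u. ExK Q1 K1 (\<lambda>v. w2 (max (max y (min u \<sigma>)) v)))"
    unfolding F_def max_swap .
  have 2: "ExK Qj Kj (\<lambda>u. c + ExK Q1 K1 (\<lambda>v. w2 (max (max y (min u \<sigma>)) v)))
        = c + ExK Qj Kj (\<lambda>u. ExK Q1 K1 (\<lambda>v. w2 (max (max y (min u \<sigma>)) v)))"
    by (rule Ex_const_add[OF gj iG'])
  show ?thesis using 1 2 by linarith
qed

lemma OA_P:
  assumes f1: "finite (set_pmf Q1)" and gj: "goodK Qj Kj"
    and l1: "\<And>t. t \<in> set_pmf Q1 \<Longrightarrow> lip (w1 t)" and l2: "\<And>t. t \<in> set_pmf Q1 \<Longrightarrow> lip (w2 t)"
    and ih: "\<And>t z. t \<in> set_pmf Q1 \<Longrightarrow> w1 t z \<le> ExK Qj Kj (\<lambda>u. w2 t (max z (min u \<sigma>))) + m"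
  shows "c + (\<integral>t. w1 t y \<partial>measure_pmf Q1)
       \<le> m + ExK Qj Kj (\<lambda>u. c + (\<integral>t. w2 t (max y (min u \<sigma>)) \<partial>measure_pmf Q1))"
proof -
  have "(\<integral>t. w1 t y \<partial>measure_pmf Q1) \<le> (\<integral>t. ExK Qj Kj (\<lambda>u. w2 t (max y (min u \<sigma>))) + m \<partial>measure_pmf Q1)"
    by (rule pmf_mono[OF f1 ih])
  also have "\<dots> = (\<integral>t. ExK Qj Kj (\<lambda>u. w2 t (max y (min u \<sigma>))) \<partial>measure_pmf Q1) + m"
    by (rule pmf_add_const[OF f1])
  also have "(\<integral>t. ExK Qj Kj (\<lambda>u. w2 t (max y (min u \<sigma>))) \<partial>measure_pmf Q1)
      = ExK Qj Kj (\<lambda>u. \<integral>t. w2 t (max y (min u \<sigma>)) \<partial>measure_pmf Q1)"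
    by (rule PSwap[OF gj f1 nice_cap[OF l2]])
  finally have 1: "(\<integral>t. w1 t y \<partial>measure_pmf Q1) \<le> ExK Qj Kj (\<lambda>u. \<integral>t. w2 t (max y (min u \<sigma>)) \<partial>measure_pmf Q1) + m" .
  have 2: "ExK Qj Kj (\<lambda>u. c + (\<integral>t. w2 t (max y (min u \<sigma>)) \<partial>measure_pmf Q1))
       = c + ExK Qj Kj (\<lambda>u. \<integral>t. w2 t (max y (min u \<sigma>)) \<partial>measure_pmf Q1)"
    by (rule Ex_const_add[OF gj intK_pmf[OF gj f1 nice_cap[OF l2]]])
  show ?thesis using 1 2 by linarith
qed

lemma g_mono:
  assumes M: "goodM M" and ab: "a \<le> b"
  shows "(\<integral>v. max 0 (v - b) \<partial>M) \<le> (\<integral>v. max 0 (v - a) \<partial>M)"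
  by (rule integral_mono[OF nice1_integrable[OF M nice_pos] nice1_integrable[OF M nice_pos]]) (use ab in auto)

context pbox
begin

lemma lipAF: "wf C P \<Longrightarrow> i \<in> C \<Longrightarrow> lip (\<lambda>y. AF n C P y i)"
  unfolding AF_def
  by (rule lip_const_add[OF lip_Ex_max[OF goodKb[OF wf_BC] lipW[OF wf_F]]])

lemma lipAP: "wf C P \<Longrightarrow> i \<in> C \<Longrightarrow> lip (\<lambda>y. AP n C P y i)"
  unfolding AP_def
  by (rule lip_const_add[OF lip_pmf[OF finGamma[OF wf_BC] lipW[OF wf_P]]])

lemma lipAFP: "wf C P \<Longrightarrow> j \<in> dom P \<Longrightarrow> lip (\<lambda>y. AFP n C P y j)"
  unfolding AFP_def
  by (rule lip_const_add[OF lip_Ex_max[OF goodK_P lipW[OF wf_FP]]])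

end



lemma intK_add:
  assumes "intK Qb Kb f" "intK Qb Kb g"
  shows "intK Qb Kb (\<lambda>u. f u + g u)"
  using assms unfolding intK_def by auto

context pbox
begin

lemma PB:
  assumes wf0: "wf C0 P0" and Pj0: "P0 j = Some tj"
  shows "W n C0 P0 y0 \<le> ExK (return_pmf tj) (K j) (\<lambda>u. W n C0 (P0(j := None)) (max y0 (min u \<sigma>)))
          + max 0 (- cF j + (\<integral>v. max 0 (v - \<sigma>) \<partial>K j tj))"
proof -
  have jdom: "j \<in> dom P0" using Pj0 by auto
  have jB: "j \<in> B" by (rule wf_BP[OF wf0 jdom])
  have tjs: "tj \<in> set_pmf (Q j)" using wf_T[OF wf0 jdom] Pj0 by simp
  have gj: "goodK (return_pmf tj) (K j)" by (rule goodK_return[where Kb="K j" and t=tj, OF goodMb[OF jB tjs]])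
  define m where "m = max 0 (- cF j + (\<integral>v. max 0 (v - \<sigma>) \<partial>K j tj))"
  have m0: "0 \<le> m" unfolding m_def by simp
  have "\<forall>C P y. wf C P \<longrightarrow> P j = Some tj \<longrightarrow>
          W n C P y \<le> ExK (return_pmf tj) (K j) (\<lambda>u. W n C (P(j := None)) (max y (min u \<sigma>))) + m"
  proof (induction n)
    case 0
    show ?case
    proof (intro allI impI)
      fix C P y assume wf: "wf C P" and Pj: "P j = Some tj"
      have wf': "wf C (P(j := None))" by (rule wf_FP[OF wf])
      have "y \<le> ExK (return_pmf tj) (K j) (\<lambda>u. W 0 C (P(j := None)) (max y (min u \<sigma>)))"
      proof (rule Ex_ge_const[OF gj nice1_intK[OF gj nice_cap[OF lipW[OF wf']]]])
        fix u show "y \<le> W 0 C (P(j := None)) (max y (min u \<sigma>))"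
          using W_ge[OF wf', of "max y (min u \<sigma>)" 0] by simp
      qed
      then show "W 0 C P y \<le> ExK (return_pmf tj) (K j) (\<lambda>u. W 0 C (P(j := None)) (max y (min u \<sigma>))) + m"
        using m0 by simp
    qed
  next
    case (Suc k)
    show ?case
    proof (intro allI impI)
      fix C P y assume wf: "wf C P" and Pj: "P j = Some tj"
      define P' where "P' = P(j := None)"
      have wf': "wf C P'" unfolding P'_def by (rule wf_FP[OF wf])
      have jd: "j \<in> dom P" using Pj by auto
      have nj: "\<And>i. i \<in> C \<Longrightarrow> i \<noteq> j" using wf jd unfolding wf_def by auto
      define R where "R = ExK (return_pmf tj) (K j) (\<lambda>u. W (Suc k) C P' (max y (min u \<sigma>)))"
      have iR: "intK (return_pmf tj) (K j) (\<lambda>u. W (Suc k) C P' (max y (min u \<sigma>)))"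
        by (rule nice1_intK[OF gj nice_cap[OF lipW[OF wf']]])
      have "W (Suc k) C P y \<le> R + m"
        unfolding W_Suc_le[OF wf]
      proof (intro conjI ballI)
        have "y \<le> R" unfolding R_def
        proof (rule Ex_ge_const[OF gj iR])
          fix u show "y \<le> W (Suc k) C P' (max y (min u \<sigma>))"
            using W_ge[OF wf', of "max y (min u \<sigma>)" "Suc k"] by simp
        qed
        then show "y \<le> R + m" using m0 by linarith
      next
        fix i assume i: "i \<in> C"
        have ij: "i \<noteq> j" by (rule nj[OF i])
        have w1: "wf (C - {i}) P" by (rule wf_F[OF wf i])
        have IH1: "W k (C - {i}) P z \<le> ExK (return_pmf tj) (K j) (\<lambda>u. W k (C - {i}) P' (max z (min u \<sigma>))) + m" for z
          using Suc.IH w1 Pj unfolding P'_def by blast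
        have "AF k C P y i \<le> m + ExK (return_pmf tj) (K j) (\<lambda>u. - cF i + ExK (Q i) (K i) (\<lambda>v. W k (C - {i}) P' (max (max y (min u \<sigma>)) v)))"
          unfolding AF_def
          by (rule OA_F[OF goodKb[OF wf_BC[OF wf i]] gj lipW[OF w1] lipW[OF wf_F[OF wf' i]] IH1])
        also have "\<dots> = m + ExK (return_pmf tj) (K j) (\<lambda>u. AF k C P' (max y (min u \<sigma>)) i)"
          unfolding AF_def ..
        also have "\<dots> \<le> m + R"
        proof -
          have "ExK (return_pmf tj) (K j) (\<lambda>u. AF k C P' (max y (min u \<sigma>)) i) \<le> R"
            unfolding R_def
            by (rule Ex_mono[OF gj nice1_intK[OF gj nice_cap[OF lipAF[OF wf' i]]] iR W_ge_AF[OF wf' i]])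
          then show ?thesis by linarith
        qed
        finally show "AF k C P y i \<le> R + m" by linarith
        have IH2: "W k (C - {i}) (P(i \<mapsto> t)) z \<le> ExK (return_pmf tj) (K j) (\<lambda>u. W k (C - {i}) (P'(i \<mapsto> t)) (max z (min u \<sigma>))) + m"
          if t: "t \<in> set_pmf (Q i)" for t z
        proof -
          have w2: "wf (C - {i}) (P(i \<mapsto> t))" by (rule wf_P[OF wf i t])
          have e1: "(P(i \<mapsto> t)) j = Some tj" using Pj ij by simp
          have e2: "(P(i \<mapsto> t))(j := None) = P'(i \<mapsto> t)" unfolding P'_def using ij by (simp add: fun_upd_twist)
          show ?thesis using Suc.IH w2 e1 unfolding e2[symmetric] by blast
        qed
        have "AP k C P y i \<le> m + ExK (return_pmf tj) (K j) (\<lambda>u. - cP i + (\<integral>t. W k (C - {i}) (P'(i \<mapsto> t)) (max y (min u \<sigma>)) \<partial>measure_pmf (Q i)))"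
          unfolding AP_def
          by (rule OA_P[OF finGamma[OF wf_BC[OF wf i]] gj lipW[OF wf_P[OF wf i]] lipW[OF wf_P[OF wf' i]] IH2])
        also have "\<dots> = m + ExK (return_pmf tj) (K j) (\<lambda>u. AP k C P' (max y (min u \<sigma>)) i)"
          unfolding AP_def ..
        also have "\<dots> \<le> m + R"
        proof -
          have "ExK (return_pmf tj) (K j) (\<lambda>u. AP k C P' (max y (min u \<sigma>)) i) \<le> R"
            unfolding R_def
            by (rule Ex_mono[OF gj nice1_intK[OF gj nice_cap[OF lipAP[OF wf' i]]] iR W_ge_AP[OF wf' i]])
          then show ?thesis by linarith
        qed
        finally show "AP k C P y i \<le> R + m" by linarith
      next
        fix i assume i: "i \<in> dom P"
        show "AFP k C P y i \<le> R + m"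
        proof (cases "i = j")
          case True
          have thej: "the (P i) = tj" using Pj True by simp
          have ig: "intK (return_pmf tj) (K j) (\<lambda>v. max 0 (v - \<sigma>))" by (rule nice1_intK[OF gj nice_pos])
          have iw: "intK (return_pmf tj) (K j) (\<lambda>v. W k C P' (max y (min v \<sigma>)))"
            by (rule nice1_intK[OF gj nice_cap[OF lipW[OF wf']]])
          have "ExK (return_pmf tj) (K j) (\<lambda>v. W k C P' (max y v))
              \<le> ExK (return_pmf tj) (K j) (\<lambda>v. W k C P' (max y (min v \<sigma>)) + max 0 (v - \<sigma>))"
            by (rule Ex_mono[OF gj nice1_intK[OF gj nice_max[OF lipW[OF wf']]] intK_add[OF iw ig] lip_own[OF lipW[OF wf']]])
          also have "\<dots> = ExK (return_pmf tj) (K j) (\<lambda>v. W k C P' (max y (min v \<sigma>))) + ExK (return_pmf tj) (K j) (\<lambda>v. max 0 (v - \<sigma>))"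
            by (rule Ex_add[OF gj iw ig])
          also have "ExK (return_pmf tj) (K j) (\<lambda>v. max 0 (v - \<sigma>)) = (\<integral>v. max 0 (v - \<sigma>) \<partial>K j tj)"
            by (rule Ex_return)
          also have "ExK (return_pmf tj) (K j) (\<lambda>v. W k C P' (max y (min v \<sigma>))) \<le> R"
            unfolding R_def by (rule Ex_mono[OF gj iw iR FM[OF wf']])
          finally have "ExK (return_pmf tj) (K j) (\<lambda>v. W k C P' (max y v)) \<le> R + (\<integral>v. max 0 (v - \<sigma>) \<partial>K j tj)"
            by linarith
          moreover have "AFP k C P y i = - cF j + ExK (return_pmf tj) (K j) (\<lambda>v. W k C P' (max y v))"
            unfolding AFP_def P'_def using True thej by simp
          moreover have "- cF j + (\<integral>v. max 0 (v - \<sigma>) \<partial>K j tj) \<le> m" unfolding m_def by simp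
          ultimately show ?thesis by linarith
        next
          case False
          have w3: "wf C (P(i := None))" by (rule wf_FP[OF wf])
          have IH3: "W k C (P(i := None)) z \<le> ExK (return_pmf tj) (K j) (\<lambda>u. W k C (P'(i := None)) (max z (min u \<sigma>))) + m" for z
          proof -
            have e1: "(P(i := None)) j = Some tj" using Pj False by simp
            have e2: "(P(i := None))(j := None) = P'(i := None)" unfolding P'_def using False by (simp add: fun_upd_twist)
            show ?thesis using Suc.IH w3 e1 unfolding e2[symmetric] by blast
          qed
          have Pi: "P' i = P i" unfolding P'_def using False by simp
          have i': "i \<in> dom P'" using i Pi by auto
          have "AFP k C P y i \<le> m + ExK (return_pmf tj) (K j) (\<lambda>u. - cF i + ExK (return_pmf (the (P i))) (K i) (\<lambda>v. W k C (P'(i := None)) (max (max y (min u \<sigma>)) v)))"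
            unfolding AFP_def
            by (rule OA_F[OF goodK_P[OF wf i] gj lipW[OF w3] lipW[OF wf_FP[OF wf']] IH3])
          also have "\<dots> = m + ExK (return_pmf tj) (K j) (\<lambda>u. AFP k C P' (max y (min u \<sigma>)) i)"
            unfolding AFP_def Pi ..
          also have "\<dots> \<le> m + R"
          proof -
            have "ExK (return_pmf tj) (K j) (\<lambda>u. AFP k C P' (max y (min u \<sigma>)) i) \<le> R"
              unfolding R_def
              by (rule Ex_mono[OF gj nice1_intK[OF gj nice_cap[OF lipAFP[OF wf' i']]] iR W_ge_AFP[OF wf' i']])
            then show ?thesis by linarith
          qed
          finally show ?thesis by linarith
        qed
      qed
      then show "W (Suc k) C P y \<le> ExK (return_pmf tj) (K j) (\<lambda>u. W (Suc k) C (P(j := None)) (max y (min u \<sigma>))) + m"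
        unfolding R_def P'_def .
    qed
  qed
  then show ?thesis using wf0 Pj0 unfolding m_def by blast
qed

end



context pbox
begin

lemma CB:
  assumes wf0: "wf C0 P0" and j0: "j \<in> C0"
  shows "W n C0 P0 y0 \<le> ExK (Q j) (K j) (\<lambda>u. W n (C0 - {j}) P0 (max y0 (min u \<sigma>)))
     + max 0 (max (- cF j + ExK (Q j) (K j) (\<lambda>v. max 0 (v - \<sigma>)))
                  (- cP j + (\<integral>t. max 0 (- cF j + (\<integral>v. max 0 (v - \<sigma>) \<partial>K j t)) \<partial>measure_pmf (Q j))))"
proof -
  have jB: "j \<in> B" by (rule wf_BC[OF wf0 j0])
  have gj: "goodK (Q j) (K j)" by (rule goodKb[OF jB])
  have fj: "finite (set_pmf (Q j))" by (rule finGamma[OF jB])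
  define m where "m = max 0 (max (- cF j + ExK (Q j) (K j) (\<lambda>v. max 0 (v - \<sigma>)))
                  (- cP j + (\<integral>t. max 0 (- cF j + (\<integral>v. max 0 (v - \<sigma>) \<partial>K j t)) \<partial>measure_pmf (Q j))))"
  have m0: "0 \<le> m" unfolding m_def by simp
  have "\<forall>C P y. wf C P \<longrightarrow> j \<in> C \<longrightarrow>
          W n C P y \<le> ExK (Q j) (K j) (\<lambda>u. W n (C - {j}) P (max y (min u \<sigma>))) + m"
  proof (induction n)
    case 0
    show ?case
    proof (intro allI impI)
      fix C P y assume wf: "wf C P" and jC: "j \<in> C"
      have wf': "wf (C - {j}) P" by (rule wf_F[OF wf jC])
      have "y \<le> ExK (Q j) (K j) (\<lambda>u. W 0 (C - {j}) P (max y (min u \<sigma>)))"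
      proof (rule Ex_ge_const[OF gj nice1_intK[OF gj nice_cap[OF lipW[OF wf']]]])
        fix u show "y \<le> W 0 (C - {j}) P (max y (min u \<sigma>))"
          using W_ge[OF wf', of "max y (min u \<sigma>)" 0] by simp
      qed
      then show "W 0 C P y \<le> ExK (Q j) (K j) (\<lambda>u. W 0 (C - {j}) P (max y (min u \<sigma>))) + m"
        using m0 by simp
    qed
  next
    case (Suc k)
    show ?case
    proof (intro allI impI)
      fix C P y assume wf: "wf C P" and jC: "j \<in> C"
      define C' where "C' = C - {j}"
      have wf': "wf C' P" unfolding C'_def by (rule wf_F[OF wf jC])
      have jnP: "P j = None" using wf jC unfolding wf_def by auto
      define R where "R = ExK (Q j) (K j) (\<lambda>u. W (Suc k) C' P (max y (min u \<sigma>)))"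
      have iR: "intK (Q j) (K j) (\<lambda>u. W (Suc k) C' P (max y (min u \<sigma>)))"
        by (rule nice1_intK[OF gj nice_cap[OF lipW[OF wf']]])
      have "W (Suc k) C P y \<le> R + m"
        unfolding W_Suc_le[OF wf]
      proof (intro conjI ballI)
        have "y \<le> R" unfolding R_def
        proof (rule Ex_ge_const[OF gj iR])
          fix u show "y \<le> W (Suc k) C' P (max y (min u \<sigma>))"
            using W_ge[OF wf', of "max y (min u \<sigma>)" "Suc k"] by simp
        qed
        then show "y \<le> R + m" using m0 by linarith
      next
        fix i assume i: "i \<in> C"
        show "AF k C P y i \<le> R + m"
        proof (cases "i = j")
          case True
          have ig: "intK (Q j) (K j) (\<lambda>v. max 0 (v - \<sigma>))" by (rule nice1_intK[OF gj nice_pos])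
          have iw: "intK (Q j) (K j) (\<lambda>v. W k C' P (max y (min v \<sigma>)))"
            by (rule nice1_intK[OF gj nice_cap[OF lipW[OF wf']]])
          have "ExK (Q j) (K j) (\<lambda>v. W k C' P (max y v))
              \<le> ExK (Q j) (K j) (\<lambda>v. W k C' P (max y (min v \<sigma>)) + max 0 (v - \<sigma>))"
            by (rule Ex_mono[OF gj nice1_intK[OF gj nice_max[OF lipW[OF wf']]] intK_add[OF iw ig] lip_own[OF lipW[OF wf']]])
          also have "\<dots> = ExK (Q j) (K j) (\<lambda>v. W k C' P (max y (min v \<sigma>))) + ExK (Q j) (K j) (\<lambda>v. max 0 (v - \<sigma>))"
            by (rule Ex_add[OF gj iw ig])
          also have "ExK (Q j) (K j) (\<lambda>v. W k C' P (max y (min v \<sigma>))) \<le> R"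
            unfolding R_def by (rule Ex_mono[OF gj iw iR FM[OF wf']])
          finally have "ExK (Q j) (K j) (\<lambda>v. W k C' P (max y v)) \<le> R + ExK (Q j) (K j) (\<lambda>v. max 0 (v - \<sigma>))"
            by linarith
          moreover have "AF k C P y i = - cF j + ExK (Q j) (K j) (\<lambda>v. W k C' P (max y v))"
            unfolding AF_def C'_def using True by simp
          moreover have "- cF j + ExK (Q j) (K j) (\<lambda>v. max 0 (v - \<sigma>)) \<le> m" unfolding m_def by simp
          ultimately show ?thesis by linarith
        next
          case False
          have w1: "wf (C - {i}) P" by (rule wf_F[OF wf i])
          have ji: "j \<in> C - {i}" using jC False by simp
          have eC: "C - {i} - {j} = C' - {i}" unfolding C'_def by blast
          have i': "i \<in> C'" unfolding C'_def using i False by simp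
          have IH1: "W k (C - {i}) P z \<le> ExK (Q j) (K j) (\<lambda>u. W k (C' - {i}) P (max z (min u \<sigma>))) + m" for z
            using Suc.IH w1 ji unfolding eC[symmetric] by blast
          have "AF k C P y i \<le> m + ExK (Q j) (K j) (\<lambda>u. - cF i + ExK (Q i) (K i) (\<lambda>v. W k (C' - {i}) P (max (max y (min u \<sigma>)) v)))"
            unfolding AF_def
            by (rule OA_F[OF goodKb[OF wf_BC[OF wf i]] gj lipW[OF w1] lipW[OF wf_F[OF wf' i']] IH1])
          also have "\<dots> = m + ExK (Q j) (K j) (\<lambda>u. AF k C' P (max y (min u \<sigma>)) i)"
            unfolding AF_def ..
          also have "\<dots> \<le> m + R"
          proof -
            have "ExK (Q j) (K j) (\<lambda>u. AF k C' P (max y (min u \<sigma>)) i) \<le> R"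
              unfolding R_def
              by (rule Ex_mono[OF gj nice1_intK[OF gj nice_cap[OF lipAF[OF wf' i']]] iR W_ge_AF[OF wf' i']])
            then show ?thesis by linarith
          qed
          finally show ?thesis by linarith
        qed
        show "AP k C P y i \<le> R + m"
        proof (cases "i = j")
          case True
          define mt where "mt = (\<lambda>t. max 0 (- cF j + (\<integral>v. max 0 (v - \<sigma>) \<partial>K j t)))"
          have b1: "W k C' (P(j \<mapsto> t)) y \<le> (\<integral>u. W k C' P (max y (min u \<sigma>)) \<partial>K j t) + mt t"
            if t: "t \<in> set_pmf (Q j)" for t
          proof -
            have w2: "wf C' (P(j \<mapsto> t))" unfolding C'_def by (rule wf_P[OF wf jC t])
            have e: "(P(j \<mapsto> t))(j := None) = P" using jnP by (simp add: fun_upd_idem)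
            from PB[OF w2, of j t k y \<sigma>] show ?thesis unfolding e Ex_return mt_def by simp
          qed
          have "(\<integral>t. W k C' (P(j \<mapsto> t)) y \<partial>measure_pmf (Q j))
              \<le> (\<integral>t. (\<integral>u. W k C' P (max y (min u \<sigma>)) \<partial>K j t) + mt t \<partial>measure_pmf (Q j))"
            by (rule pmf_mono[OF fj b1])
          also have "\<dots> = ExK (Q j) (K j) (\<lambda>u. W k C' P (max y (min u \<sigma>))) + (\<integral>t. mt t \<partial>measure_pmf (Q j))"
            unfolding ExK_def by (rule pmf_add[OF fj])
          also have "ExK (Q j) (K j) (\<lambda>u. W k C' P (max y (min u \<sigma>))) \<le> R"
            unfolding R_def by (rule Ex_mono[OF gj nice1_intK[OF gj nice_cap[OF lipW[OF wf']]] iR FM[OF wf']])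
          finally have "(\<integral>t. W k C' (P(j \<mapsto> t)) y \<partial>measure_pmf (Q j)) \<le> R + (\<integral>t. mt t \<partial>measure_pmf (Q j))"
            by linarith
          moreover have "AP k C P y i = - cP j + (\<integral>t. W k C' (P(j \<mapsto> t)) y \<partial>measure_pmf (Q j))"
            unfolding AP_def C'_def using True by simp
          moreover have "- cP j + (\<integral>t. mt t \<partial>measure_pmf (Q j)) \<le> m" unfolding m_def mt_def by simp
          ultimately show ?thesis by linarith
        next
          case False
          have ji: "j \<in> C - {i}" using jC False by simp
          have eC: "C - {i} - {j} = C' - {i}" unfolding C'_def by blast
          have i': "i \<in> C'" unfolding C'_def using i False by simp
          have IH2: "W k (C - {i}) (P(i \<mapsto> t)) z \<le> ExK (Q j) (K j) (\<lambda>u. W k (C' - {i}) (P(i \<mapsto> t)) (max z (min u \<sigma>))) + m"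
            if t: "t \<in> set_pmf (Q i)" for t z
          proof -
            have w2: "wf (C - {i}) (P(i \<mapsto> t))" by (rule wf_P[OF wf i t])
            show ?thesis using Suc.IH w2 ji unfolding eC[symmetric] by blast
          qed
          have "AP k C P y i \<le> m + ExK (Q j) (K j) (\<lambda>u. - cP i + (\<integral>t. W k (C' - {i}) (P(i \<mapsto> t)) (max y (min u \<sigma>)) \<partial>measure_pmf (Q i)))"
            unfolding AP_def
            by (rule OA_P[OF finGamma[OF wf_BC[OF wf i]] gj lipW[OF wf_P[OF wf i]] lipW[OF wf_P[OF wf' i']] IH2])
          also have "\<dots> = m + ExK (Q j) (K j) (\<lambda>u. AP k C' P (max y (min u \<sigma>)) i)"
            unfolding AP_def ..
          also have "\<dots> \<le> m + R"
          proof -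
            have "ExK (Q j) (K j) (\<lambda>u. AP k C' P (max y (min u \<sigma>)) i) \<le> R"
              unfolding R_def
              by (rule Ex_mono[OF gj nice1_intK[OF gj nice_cap[OF lipAP[OF wf' i']]] iR W_ge_AP[OF wf' i']])
            then show ?thesis by linarith
          qed
          finally show ?thesis by linarith
        qed
      next
        fix i assume i: "i \<in> dom P"
        have w3: "wf C (P(i := None))" by (rule wf_FP[OF wf])
        have IH3: "W k C (P(i := None)) z \<le> ExK (Q j) (K j) (\<lambda>u. W k C' (P(i := None)) (max z (min u \<sigma>))) + m" for z
          using Suc.IH w3 jC unfolding C'_def by blast
        have "AFP k C P y i \<le> m + ExK (Q j) (K j) (\<lambda>u. - cF i + ExK (return_pmf (the (P i))) (K i) (\<lambda>v. W k C' (P(i := None)) (max (max y (min u \<sigma>)) v)))"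
          unfolding AFP_def
          by (rule OA_F[OF goodK_P[OF wf i] gj lipW[OF w3] lipW[OF wf_FP[OF wf']] IH3])
        also have "\<dots> = m + ExK (Q j) (K j) (\<lambda>u. AFP k C' P (max y (min u \<sigma>)) i)"
          unfolding AFP_def ..
        also have "\<dots> \<le> m + R"
        proof -
          have "ExK (Q j) (K j) (\<lambda>u. AFP k C' P (max y (min u \<sigma>)) i) \<le> R"
            unfolding R_def
            by (rule Ex_mono[OF gj nice1_intK[OF gj nice_cap[OF lipAFP[OF wf' i]]] iR W_ge_AFP[OF wf' i]])
          then show ?thesis by linarith
        qed
        finally show "AFP k C P y i \<le> R + m" by linarith
      qed
      then show "W (Suc k) C P y \<le> ExK (Q j) (K j) (\<lambda>u. W (Suc k) (C - {j}) P (max y (min u \<sigma>))) + m"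
        unfolding R_def C'_def .
    qed
  qed
  then show ?thesis using wf0 j0 unfolding m_def by blast
qed

end



lemma F_bound:
  assumes g: "goodK Qb Kb" and l: "lip w" and wle: "\<And>x. z \<le> x \<Longrightarrow> w x \<le> x"
    and th: "ExK Qb Kb (\<lambda>v. max 0 (v - s)) = c" and sz: "s \<le> z"
  shows "- c + ExK Qb Kb (\<lambda>v. w (max z v)) \<le> z"
proof -
  have ip: "intK Qb Kb (\<lambda>v. max 0 (v - z))" by (rule nice1_intK[OF g nice_pos])
  have "ExK Qb Kb (\<lambda>v. w (max z v)) \<le> ExK Qb Kb (\<lambda>v. max 0 (v - z) + z)"
  proof (rule Ex_mono[OF g nice1_intK[OF g nice_max[OF l]] intK_add_const[OF g ip]])
    fix v
    have "w (max z v) \<le> max z v" by (rule wle) simp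
    moreover have "max z v = max 0 (v - z) + z" by (cases "z \<le> v") (simp_all add: max_def)
    ultimately show "w (max z v) \<le> max 0 (v - z) + z" by simp
  qed
  also have "\<dots> = ExK Qb Kb (\<lambda>v. max 0 (v - z)) + z" by (rule Ex_add_const[OF g ip])
  also have "ExK Qb Kb (\<lambda>v. max 0 (v - z)) \<le> ExK Qb Kb (\<lambda>v. max 0 (v - s))"
  proof (rule Ex_mono[OF g ip nice1_intK[OF g nice_pos]])
    fix v show "max 0 (v - z) \<le> max 0 (v - s)" by (rule max.mono) (use sz in simp_all)
  qed
  finally show ?thesis using th by linarith
qed

locale pbox2 = pbox Q K cF cP B for Q :: "'b \<Rightarrow> 't pmf" and K cF cP B +
  fixes sF sP :: "'b \<Rightarrow> real" and sFt :: "'b \<Rightarrow> 't \<Rightarrow> real"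
  assumes thrF: "\<And>b. b \<in> B \<Longrightarrow> is_sigmaF (Q b) (K b) (cF b) (sF b)"
    and thrP: "\<And>b. b \<in> B \<Longrightarrow> is_sigmaP (Q b) (K b) (cF b) (cP b) (sP b)"
    and thrFt: "\<And>b t. b \<in> B \<Longrightarrow> t \<in> set_pmf (Q b) \<Longrightarrow> is_sigmaF_cond (K b t) (cF b) (sFt b t)"
begin

lemma ST:
  assumes wf0: "wf C0 P0" and h1: "\<And>j. j \<in> C0 \<Longrightarrow> sF j \<le> z0 \<and> sP j \<le> z0"
    and h2: "\<And>j. j \<in> dom P0 \<Longrightarrow> sFt j (the (P0 j)) \<le> z0"
  shows "W n C0 P0 z0 \<le> z0"
proof -
  have "\<forall>C P z. wf C P \<longrightarrow> (\<forall>j\<in>C. sF j \<le> z \<and> sP j \<le> z) \<longrightarrow> (\<forall>j\<in>dom P. sFt j (the (P j)) \<le> z)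
          \<longrightarrow> W n C P z \<le> z"
  proof (induction n)
    case 0 then show ?case by simp
  next
    case (Suc k)
    show ?case
    proof (intro allI impI)
      fix C P z
      assume wf: "wf C P" and hC: "\<forall>j\<in>C. sF j \<le> z \<and> sP j \<le> z" and hP: "\<forall>j\<in>dom P. sFt j (the (P j)) \<le> z"
      show "W (Suc k) C P z \<le> z"
        unfolding W_Suc_le[OF wf]
      proof (intro conjI ballI)
        show "z \<le> z" by simp
      next
        fix j assume j: "j \<in> C"
        have jB: "j \<in> B" by (rule wf_BC[OF wf j])
        have w1: "wf (C - {j}) P" by (rule wf_F[OF wf j])
        have wle: "W k (C - {j}) P x \<le> x" if "z \<le> x" for x
        proof -
          have "\<forall>i\<in>C - {j}. sF i \<le> x \<and> sP i \<le> x" using hC that by force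
          moreover have "\<forall>i\<in>dom P. sFt i (the (P i)) \<le> x" using hP that by force
          ultimately show ?thesis using Suc.IH w1 by blast
        qed
        have th: "ExK (Q j) (K j) (\<lambda>v. max 0 (v - sF j)) = cF j"
          using thrF[OF jB] unfolding is_sigmaF_def ExK_def .
        have "- cF j + ExK (Q j) (K j) (\<lambda>v. W k (C - {j}) P (max z v)) \<le> z"
          by (rule F_bound[OF goodKb[OF jB] lipW[OF w1] wle th]) (use hC j in auto)
        then show "AF k C P z j \<le> z" unfolding AF_def .
        have fj: "finite (set_pmf (Q j))" by (rule finGamma[OF jB])
        have jnP: "P j = None" using wf j unfolding wf_def by auto
        define mt where "mt = (\<lambda>t. max 0 (- cF j + (\<integral>v. max 0 (v - sP j) \<partial>K j t)))"
        have b: "W k (C - {j}) (P(j \<mapsto> t)) z \<le> z + mt t" if t: "t \<in> set_pmf (Q j)" for t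
        proof -
          have w2: "wf (C - {j}) (P(j \<mapsto> t))" by (rule wf_P[OF wf j t])
          have e: "(P(j \<mapsto> t))(j := None) = P" using jnP by (simp add: fun_upd_idem)
          have mz: "\<And>u. max z (min u z) = z" by (simp add: max_def min_def)
          have gt: "goodK (return_pmf t) (K j)" by (rule goodK_return[where Kb="K j" and t=t, OF goodMb[OF jB t]])
          have A0: "W k (C - {j}) (P(j \<mapsto> t)) z \<le> ExK (return_pmf t) (K j) (\<lambda>u. W k (C - {j}) P z)
                 + max 0 (- cF j + (\<integral>v. max 0 (v - z) \<partial>K j t))"
            using PB[OF w2 fun_upd_same[of P j "Some t"], of k z z] unfolding e mz .
          have A1: "ExK (return_pmf t) (K j) (\<lambda>u. W k (C - {j}) P z) = W k (C - {j}) P z"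
            by (rule Ex_const[OF gt])
          have A2: "W k (C - {j}) P z \<le> z"
          proof -
            have "\<forall>i\<in>C - {j}. sF i \<le> z \<and> sP i \<le> z" using hC by force
            then show ?thesis using Suc.IH w1 hP by blast
          qed
          have A3: "(\<integral>v. max 0 (v - z) \<partial>K j t) \<le> (\<integral>v. max 0 (v - sP j) \<partial>K j t)"
            by (rule g_mono[OF goodMb[OF jB t]]) (use hC j in auto)
          have A4: "max 0 (- cF j + (\<integral>v. max 0 (v - z) \<partial>K j t)) \<le> mt t"
            unfolding mt_def by (rule max.mono) (use A3 in simp_all)
          show ?thesis using A0 A1 A2 A4 by linarith
        qed
        have "(\<integral>t. W k (C - {j}) (P(j \<mapsto> t)) z \<partial>measure_pmf (Q j)) \<le> (\<integral>t. z + mt t \<partial>measure_pmf (Q j))"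
          by (rule pmf_mono[OF fj b])
        also have "\<dots> = z + (\<integral>t. mt t \<partial>measure_pmf (Q j))" by (rule pmf_const_add[OF fj])
        also have "(\<integral>t. mt t \<partial>measure_pmf (Q j)) = cP j"
          using thrP[OF jB] unfolding is_sigmaP_def mt_def .
        finally show "AP k C P z j \<le> z" unfolding AP_def by linarith
      next
        fix j assume j: "j \<in> dom P"
        have jB: "j \<in> B" by (rule wf_BP[OF wf j])
        have tjs: "the (P j) \<in> set_pmf (Q j)" by (rule wf_T[OF wf j])
        have w3: "wf C (P(j := None))" by (rule wf_FP[OF wf])
        have wle: "W k C (P(j := None)) x \<le> x" if "z \<le> x" for x
        proof -
          have "\<forall>i\<in>C. sF i \<le> x \<and> sP i \<le> x" using hC that by force
          moreover have "\<forall>i\<in>dom (P(j := None)). sFt i (the ((P(j := None)) i)) \<le> x"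
          proof
            fix i assume ii: "i \<in> dom (P(j := None))"
            then have ij: "i \<noteq> j" and iP: "i \<in> dom P" by (auto simp: domIff)
            have "(P(j := None)) i = P i" using ij by simp
            then show "sFt i (the ((P(j := None)) i)) \<le> x" using hP iP that by force
          qed
          ultimately show ?thesis using Suc.IH w3 by blast
        qed
        have th: "ExK (return_pmf (the (P j))) (K j) (\<lambda>v. max 0 (v - sFt j (the (P j)))) = cF j"
          using thrFt[OF jB tjs] unfolding is_sigmaF_cond_def Ex_return .
        have "- cF j + ExK (return_pmf (the (P j))) (K j) (\<lambda>v. W k C (P(j := None)) (max z v)) \<le> z"
          by (rule F_bound[OF goodK_P[OF wf j] lipW[OF w3] wle th]) (use hP j in auto)
        then show "AFP k C P z j \<le> z" unfolding AFP_def .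
      qed
    qed
  qed
  then show ?thesis using wf0 h1 h2 by blast
qed

lemma main:
  assumes st1: "C \<union> dom P \<subseteq> B" and st2: "C \<inter> dom P = {}"
    and types: "\<And>j. j \<in> dom P \<Longrightarrow> the (P j) \<in> set_pmf (Q j)"
    and ns: "y < pb_value Q K cF cP C P y"
    and iC: "i \<in> C" and gap: "sF i > sP i"
    and maxi: "\<And>j. j \<in> C \<Longrightarrow> sF j \<le> sF i \<and> sP j \<le> sF i"
    and maxiP: "\<And>j. j \<in> dom P \<Longrightarrow> sFt j (the (P j)) \<le> sF i"
  shows "pb_value_Fopen Q K cF cP C P y i = pb_value Q K cF cP C P y"
proof -
  have wf: "wf C P" unfolding wf_def using st1 st2 types by blast
  define \<sigma> where "\<sigma> = sF i"
  define N where "N = need C P"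
  define C' where "C' = C - {i}"
  define n' where "n' = need C' P"
  have pv: "pb_value Q K cF cP C P y = W N C P y" unfolding pb_value_def N_def need_def ..
  have wf': "wf C' P" unfolding C'_def by (rule wf_F[OF wf iC])
  have eN: "n' + 2 = N" unfolding n'_def N_def C'_def by (rule need_F[OF wf iC])
  have iB: "i \<in> B" by (rule wf_BC[OF wf iC])
  have gi: "goodK (Q i) (K i)" by (rule goodKb[OF iB])
  have fi: "finite (set_pmf (Q i))" by (rule finGamma[OF iB])
  have y\<sigma>: "y < \<sigma>"
  proof (rule ccontr)
    assume "\<not> y < \<sigma>"
    then have sy: "\<sigma> \<le> y" by simp
    have "W N C P y \<le> y"
    proof (rule ST[OF wf])
      fix j assume "j \<in> C" then show "sF j \<le> y \<and> sP j \<le> y" using maxi sy unfolding \<sigma>_def by force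
    next
      fix j assume "j \<in> dom P" then show "sFt j (the (P j)) \<le> y" using maxiP sy unfolding \<sigma>_def by force
    qed
    then show False using ns pv by simp
  qed
  have stop\<sigma>: "W n' C' P x = x" if "\<sigma> \<le> x" for x
  proof (rule antisym)
    show "W n' C' P x \<le> x"
    proof (rule ST[OF wf'])
      fix j assume "j \<in> C'" then show "sF j \<le> x \<and> sP j \<le> x" using maxi that unfolding \<sigma>_def C'_def by force
    next
      fix j assume "j \<in> dom P" then show "sFt j (the (P j)) \<le> x" using maxiP that unfolding \<sigma>_def by force
    qed
    show "x \<le> W n' C' P x" by (rule W_ge[OF wf'])
  qed
  have key: "W n' C' P (max y v) = W n' C' P (max y (min v \<sigma>)) + max 0 (v - \<sigma>)" for v
  proof (cases "v \<le> \<sigma>")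
    case True then show ?thesis by simp
  next
    case False
    then have e1: "max y v = v" and e2: "max y (min v \<sigma>) = \<sigma>" and e3: "max 0 (v - \<sigma>) = v - \<sigma>"
      using y\<sigma> by auto
    show ?thesis unfolding e1 e2 e3 using stop\<sigma>[of v] stop\<sigma>[of \<sigma>] False by simp
  qed
  have iw: "intK (Q i) (K i) (\<lambda>v. W n' C' P (max y (min v \<sigma>)))"
    by (rule nice1_intK[OF gi nice_cap[OF lipW[OF wf']]])
  have ig: "intK (Q i) (K i) (\<lambda>v. max 0 (v - \<sigma>))" by (rule nice1_intK[OF gi nice_pos])
  have thF: "ExK (Q i) (K i) (\<lambda>v. max 0 (v - \<sigma>)) = cF i"
    using thrF[OF iB] unfolding is_sigmaF_def ExK_def \<sigma>_def .
  have fo: "pb_value_Fopen Q K cF cP C P y i = - cF i + ExK (Q i) (K i) (\<lambda>v. W n' C' P (max y v))"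
    unfolding pb_value_Fopen_def pb_value_def ExK_def n'_def need_def C'_def ..
  have "ExK (Q i) (K i) (\<lambda>v. W n' C' P (max y v)) = ExK (Q i) (K i) (\<lambda>v. W n' C' P (max y (min v \<sigma>)) + max 0 (v - \<sigma>))"
    by (rule arg_cong[where f="ExK (Q i) (K i)"]) (rule ext, rule key)
  also have "\<dots> = ExK (Q i) (K i) (\<lambda>v. W n' C' P (max y (min v \<sigma>))) + ExK (Q i) (K i) (\<lambda>v. max 0 (v - \<sigma>))"
    by (rule Ex_add[OF gi iw ig])
  finally have fo2: "pb_value_Fopen Q K cF cP C P y i = ExK (Q i) (K i) (\<lambda>v. W n' C' P (max y (min v \<sigma>)))"
    using fo thF by linarith
  have cb: "W N C P y \<le> ExK (Q i) (K i) (\<lambda>u. W N C' P (max y (min u \<sigma>)))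
     + max 0 (max (- cF i + ExK (Q i) (K i) (\<lambda>v. max 0 (v - \<sigma>)))
                  (- cP i + (\<integral>t. max 0 (- cF i + (\<integral>v. max 0 (v - \<sigma>) \<partial>K i t)) \<partial>measure_pmf (Q i))))"
    unfolding C'_def by (rule CB[OF wf iC])
  have a2: "(\<integral>t. max 0 (- cF i + (\<integral>v. max 0 (v - \<sigma>) \<partial>K i t)) \<partial>measure_pmf (Q i)) \<le> cP i"
  proof -
    have "(\<integral>t. max 0 (- cF i + (\<integral>v. max 0 (v - \<sigma>) \<partial>K i t)) \<partial>measure_pmf (Q i))
        \<le> (\<integral>t. max 0 (- cF i + (\<integral>v. max 0 (v - sP i) \<partial>K i t)) \<partial>measure_pmf (Q i))"
    proof (rule pmf_mono[OF fi])
      fix t assume t: "t \<in> set_pmf (Q i)"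
      have "(\<integral>v. max 0 (v - \<sigma>) \<partial>K i t) \<le> (\<integral>v. max 0 (v - sP i) \<partial>K i t)"
        by (rule g_mono[OF goodMb[OF iB t]]) (use gap in \<open>simp add: \<sigma>_def\<close>)
      then show "max 0 (- cF i + (\<integral>v. max 0 (v - \<sigma>) \<partial>K i t)) \<le> max 0 (- cF i + (\<integral>v. max 0 (v - sP i) \<partial>K i t))"
        by (intro max.mono) simp_all
    qed
    also have "\<dots> = cP i" using thrP[OF iB] unfolding is_sigmaP_def .
    finally show ?thesis .
  qed
  have sat: "W N C' P z = W n' C' P z" for z
    unfolding n'_def by (rule SAT[OF wf']) (use eN in \<open>simp add: n'_def\<close>)
  have le1: "W N C P y \<le> pb_value_Fopen Q K cF cP C P y i"
    using cb a2 thF unfolding sat fo2 by simp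
  have NS: "N = Suc (Suc n')" using eN by simp
  have "pb_value_Fopen Q K cF cP C P y i = AF n' C P y i"
    unfolding fo AF_def C'_def ..
  also have "\<dots> \<le> AF (Suc n') C P y i"
    by (rule AF_mono_W[OF wf iC FM[OF wf_F[OF wf iC]]])
  also have "\<dots> \<le> W N C P y" unfolding NS by (rule W_ge_AF[OF wf iC])
  finally have le2: "pb_value_Fopen Q K cF cP C P y i \<le> W N C P y" .
  show ?thesis using le1 le2 pv by simp
qed

end


theorem mainTheorem3:
  fixes Q :: "'b \<Rightarrow> 't pmf" and K :: "'b \<Rightarrow> 't \<Rightarrow> real measure"
    and cF cP :: "'b \<Rightarrow> real" and B :: "'b set"
    and sF sP :: "'b \<Rightarrow> real" and sFt :: "'b \<Rightarrow> 't \<Rightarrow> real"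
    and C :: "'b set" and P :: "'b \<rightharpoonup> 't" and y :: real and i :: 'b
  assumes finB: "finite B"
    and finGamma: "\<And>b. b \<in> B \<Longrightarrow> finite (set_pmf (Q b))"
    and probK: "\<And>b t. b \<in> B \<Longrightarrow> t \<in> set_pmf (Q b) \<Longrightarrow> prob_space (K b t)"
    and borelK: "\<And>b t. b \<in> B \<Longrightarrow> t \<in> set_pmf (Q b) \<Longrightarrow> sets (K b t) = sets borel"
    and nonnegK: "\<And>b t. b \<in> B \<Longrightarrow> t \<in> set_pmf (Q b) \<Longrightarrow> AE v in K b t. 0 \<le> v"
    and intK: "\<And>b t. b \<in> B \<Longrightarrow> t \<in> set_pmf (Q b) \<Longrightarrow> integrable (K b t) (\<lambda>v. v)"
    and costs: "\<And>b. b \<in> B \<Longrightarrow> 0 < cF b \<and> 0 < cP b"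
    and thrF: "\<And>b. b \<in> B \<Longrightarrow> is_sigmaF (Q b) (K b) (cF b) (sF b)"
    and thrP: "\<And>b. b \<in> B \<Longrightarrow> is_sigmaP (Q b) (K b) (cF b) (cP b) (sP b)"
    and thrFt: "\<And>b t. b \<in> B \<Longrightarrow> t \<in> set_pmf (Q b) \<Longrightarrow> is_sigmaF_cond (K b t) (cF b) (sFt b t)"
    and state: "C \<union> dom P \<subseteq> B" "C \<inter> dom P = {}"
    and types: "\<And>j. j \<in> dom P \<Longrightarrow> the (P j) \<in> set_pmf (Q j)"
    and not_stop: "y < pb_value Q K cF cP C P y"
    and iC: "i \<in> C"
    and gapi: "sF i > sP i"
    and maxi: "\<And>j. j \<in> C \<Longrightarrow> sF j \<le> sF i \<and> sP j \<le> sF i"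
    and maxiP: "\<And>j. j \<in> dom P \<Longrightarrow> sFt j (the (P j)) \<le> sF i"
  shows "pb_value_Fopen Q K cF cP C P y i = pb_value Q K cF cP C P y"
proof -
  have loc: "pbox2 Q K cF cP B sF sP sFt"
    unfolding pbox2_def pbox2_axioms_def pbox_def
    using finB finGamma probK borelK intK thrF thrP thrFt by blast
  interpret pbox2 Q K cF cP B sF sP sFt by (rule loc)
  show ?thesis by (rule main[OF state(1) state(2) types not_stop iC gapi maxi maxiP])
qed

end
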